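(* Let $\rho$ be a mixed memory over a set $X$ of program variables, and let $A$ be a predicate. For sets $E$ of entangled ghosts and $U$ of unentangled ghosts, write $\rho\models^{E U}A$ for "$\rho\models A$ where $A$ is interpreted as a predicate over $X\cup E\cup U$". Assume $E_1\cup U_1$ and $E_2\cup U_2$ both contain all variables of $\mathrm{fv}(A)\setminus X$ (i.e., $A$, as a predicate over $X\cup E_i\cup U_i$, equals $(X\cup E_i\cup U_i\cap W)\in_q S$ for its set of free variables $W$). Then $\rho\models^{E_1U_1}A$ iff $\rho\models^{E_2U_2}A$.
   Context: Variables have types (sets with a distinguished element $0$) and are of three disjoint kinds: program variables, entangled ghosts, unentangled ghosts. $\ell^2[V]$ is the Hilbert space with orthonormal basis indexed by assignments on $V$ (quantum memories over $V$); $\ell^2[V\cup W]\cong\ell^2[V]\otimes\ell^2[W]$. Mixed memories over $V$ are positive trace-class operators on $\ell^2[V]$; $\mathrm{tr}_W$ is partial trace. A mixed memory over $V\cup W$ is $(V,W)$-separable if it is a convergent sum $\sum_i\rho_i\otimes\rho_i'$ of mixed memories over $V$ and $W$. $\mathrm{supp}\,\rho$ is the closure of the range of $\rho$. A predicate over $V$ is a closed subspace of $\ell^2[V]$; for $W\subseteq V$ and a closed subspace $S\subseteq\ell^2[W]$, $(W\in_q S):=S\otimes\ell^2[V\setminus W]$. Predicates $A$ over $V$ and $A'$ over $W$ are identified when $A\otimes\ell^2[W\setminus V]=A'\otimes\ell^2[V\setminus W]$; "$\mathrm{fv}(A)\subseteq W$" means $A=(W\in_q S)$ for some $S$. For program variables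 $X$, entangled ghosts $E$, unentangled ghosts $U$ and a predicate $A$ over $X\cup E\cup U$, $\rho$ over $X$ satisfies $A$ iff there exists an $(X\cup E,U)$-separable mixed memory $\rho^\circ$ over $X\cup E\cup U$ with $\mathrm{supp}\,\rho^\circ\subseteq A$ and $\mathrm{tr}_{E\cup U}\rho^\circ=\rho$. *)

theory Defs
  imports "HOL-Analysis.Analysis" "HOL-Library.FuncSet"
begin

text \<open>Variables have type 'v, values live in a universal type 'val; the type of a
variable v is the set tp v (a set with a distinguished element; only nonemptiness
matters here). A (classical) memory / assignment over V is an element of
PiE V tp (extensional: undefined outside V).\<close>

datatype vkind = Program | Entangled | Unentangled

type_synonym ('v,'val) mem = "'v \<Rightarrow> 'val"
type_synonym ('v,'val) qvec = "('v,'val) mem \<Rightarrow> complex"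
type_synonym ('v,'val) qop = "('v,'val) mem \<Rightarrow> ('v,'val) mem \<Rightarrow> complex"

definition mems :: "('v \<Rightarrow> 'val set) \<Rightarrow> 'v set \<Rightarrow> ('v,'val) mem set" where
  "mems tp V = PiE V tp"

definition l2 :: "('v \<Rightarrow> 'val set) \<Rightarrow> 'v set \<Rightarrow> ('v,'val) qvec set" where
  "l2 tp V = {\<psi>. (\<forall>m. m \<notin> mems tp V \<longrightarrow> \<psi> m = 0)
                  \<and> (\<lambda>m. (cmod (\<psi> m))^2) summable_on mems tp V}"

definition l2norm :: "('v \<Rightarrow> 'val set) \<Rightarrow> 'v set \<Rightarrow> ('v,'val) qvec \<Rightarrow> real" where
  "l2norm tp V \<psi> = sqrt (infsum (\<lambda>m. (cmod (\<psi> m))^2) (mems tp V))"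

definition l2inner :: "('v \<Rightarrow> 'val set) \<Rightarrow> 'v set \<Rightarrow> ('v,'val) qvec \<Rightarrow> ('v,'val) qvec \<Rightarrow> complex" where
  "l2inner tp V \<phi> \<psi> = infsum (\<lambda>m. cnj (\<phi> m) * \<psi> m) (mems tp V)"

text \<open>Operators on l2[V] are represented by their matrices K m m' = <e_m, K e_m'>
w.r.t. the canonical orthonormal basis (entries vanish outside assignments over V).\<close>
definition qapply :: "('v \<Rightarrow> 'val set) \<Rightarrow> 'v set \<Rightarrow> ('v,'val) qop \<Rightarrow> ('v,'val) qvec \<Rightarrow> ('v,'val) qvec" where
  "qapply tp V K \<psi> = (\<lambda>m. if m \<in> mems tp V then infsum (\<lambda>m'. K m m' * \<psi> m') (mems tp V) else 0)"

text \<open>Mixed memory over V: positive trace-class (bounded) operator on l2[V].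
For positive operators, trace class means the diagonal is summable.\<close>
definition mixed :: "('v \<Rightarrow> 'val set) \<Rightarrow> 'v set \<Rightarrow> ('v,'val) qop \<Rightarrow> bool" where
  "mixed tp V K \<longleftrightarrow>
     (\<forall>m m'. (m \<notin> mems tp V \<or> m' \<notin> mems tp V) \<longrightarrow> K m m' = 0)
   \<and> (\<forall>m. (\<lambda>m'. K m m') \<in> l2 tp V)
   \<and> (\<exists>C. \<forall>\<psi>\<in>l2 tp V. qapply tp V K \<psi> \<in> l2 tp V
                      \<and> l2norm tp V (qapply tp V K \<psi>) \<le> C * l2norm tp V \<psi>)
   \<and> (\<forall>\<psi>\<in>l2 tp V. Im (l2inner tp V \<psi> (qapply tp V K \<psi>)) = 0
                  \<and> Re (l2inner tp V \<psi> (qapply tp V K \<psi>)) \<ge> 0)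
   \<and> (\<lambda>m. Re (K m m)) summable_on mems tp V"

definition merge :: "'v set \<Rightarrow> ('v,'val) mem \<Rightarrow> ('v,'val) mem \<Rightarrow> ('v,'val) mem" where
  "merge V m n = (\<lambda>v. if v \<in> V then m v else n v)"

definition ptrace :: "('v \<Rightarrow> 'val set) \<Rightarrow> 'v set \<Rightarrow> 'v set \<Rightarrow> ('v,'val) qop \<Rightarrow> ('v,'val) qop" where
  "ptrace tp V W K = (\<lambda>m m'. if m \<in> mems tp V \<and> m' \<in> mems tp V
      then infsum (\<lambda>n. K (merge V m n) (merge V m' n)) (mems tp W) else 0)"

definition qtensor :: "('v \<Rightarrow> 'val set) \<Rightarrow> 'v set \<Rightarrow> 'v set \<Rightarrow> ('v,'val) qop \<Rightarrow> ('v,'val) qop \<Rightarrow> ('v,'val) qop" where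
  "qtensor tp V W K K' = (\<lambda>m m'. if m \<in> mems tp (V \<union> W) \<and> m' \<in> mems tp (V \<union> W)
      then K (restrict m V) (restrict m' V) * K' (restrict m W) (restrict m' W) else 0)"

text \<open>Convergence is stated entrywise; for sums of positive operators
converging to a trace-class operator this coincides with trace-norm convergence.\<close>
definition separable :: "('v \<Rightarrow> 'val set) \<Rightarrow> 'v set \<Rightarrow> 'v set \<Rightarrow> ('v,'val) qop \<Rightarrow> bool" where
  "separable tp V W K \<longleftrightarrow> (\<exists>\<rho>s \<rho>s' :: nat \<Rightarrow> ('v,'val) qop.
      (\<forall>i. mixed tp V (\<rho>s i) \<and> mixed tp W (\<rho>s' i))
    \<and> (\<forall>m m'. (\<lambda>i. qtensor tp V W (\<rho>s i) (\<rho>s' i) m m') sums K m m'))"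

definition csubspace :: "('v \<Rightarrow> 'val set) \<Rightarrow> 'v set \<Rightarrow> ('v,'val) qvec set \<Rightarrow> bool" where
  "csubspace tp V S \<longleftrightarrow> S \<subseteq> l2 tp V \<and> (\<lambda>_. 0) \<in> S
    \<and> (\<forall>\<phi>\<in>S. \<forall>\<psi>\<in>S. (\<lambda>m. \<phi> m + \<psi> m) \<in> S)
    \<and> (\<forall>c. \<forall>\<phi>\<in>S. (\<lambda>m. c * \<phi> m) \<in> S)
    \<and> (\<forall>\<psi>\<in>l2 tp V. (\<forall>\<epsilon>>0. \<exists>\<phi>\<in>S. l2norm tp V (\<lambda>m. \<psi> m - \<phi> m) < \<epsilon>) \<longrightarrow> \<psi> \<in> S)"

definition supp :: "('v \<Rightarrow> 'val set) \<Rightarrow> 'v set \<Rightarrow> ('v,'val) qop \<Rightarrow> ('v,'val) qvec set" where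
  "supp tp V K = {\<psi>\<in>l2 tp V. \<forall>\<epsilon>>0. \<exists>\<phi>\<in>l2 tp V.
       l2norm tp V (\<lambda>m. \<psi> m - qapply tp V K \<phi> m) < \<epsilon>}"

text \<open>(W \<in>q S) as a predicate over V (W \<subseteq> V, S closed subspace of l2[W]):
S \<otimes> l2[V - W], the closed span of the product vectors.\<close>
definition qin :: "('v \<Rightarrow> 'val set) \<Rightarrow> 'v set \<Rightarrow> 'v set \<Rightarrow> ('v,'val) qvec set \<Rightarrow> ('v,'val) qvec set" where
  "qin tp V W S = \<Inter>{T. csubspace tp V T \<and>
      (\<forall>\<phi>\<in>S. \<forall>\<xi>\<in>l2 tp (V - W).
         (\<lambda>m. if m \<in> mems tp V then \<phi> (restrict m W) * \<xi> (restrict m (V - W)) else 0) \<in> T)}"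

definition satisfies :: "('v \<Rightarrow> 'val set) \<Rightarrow> 'v set \<Rightarrow> 'v set \<Rightarrow> 'v set \<Rightarrow> ('v,'val) qvec set \<Rightarrow> ('v,'val) qop \<Rightarrow> bool" where
  "satisfies tp X E U A \<rho> \<longleftrightarrow> (\<exists>\<rho>o. mixed tp (X \<union> E \<union> U) \<rho>o
      \<and> separable tp (X \<union> E) U \<rho>o
      \<and> supp tp (X \<union> E \<union> U) \<rho>o \<subseteq> A
      \<and> ptrace tp X (E \<union> U) \<rho>o = \<rho>)"

end

theory Submission
  imports Defs
begin

lemma mems_iff: "m \<in> mems tp V \<longleftrightarrow> (\<forall>v\<in>V. m v \<in> tp v) \<and> (\<forall>v. v \<notin> V \<longrightarrow> m v = undefined)"
  unfolding mems_def PiE_def extensional_def by auto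

lemma merge_mems:
  assumes "a \<in> mems tp V" "b \<in> mems tp G"
  shows "merge V a b \<in> mems tp (V \<union> G)"
  using assms unfolding mems_iff merge_def by auto

lemma restrict_merge1:
  assumes "a \<in> mems tp V"
  shows "restrict (merge V a b) V = a"
  using assms unfolding mems_iff merge_def restrict_def by auto

lemma restrict_merge2:
  assumes "b \<in> mems tp G" "V \<inter> G = {}"
  shows "restrict (merge V a b) G = b"
  using assms unfolding mems_iff merge_def restrict_def by (auto intro!: ext)

lemma merge_restrict:
  assumes "m \<in> mems tp (V \<union> G)"
  shows "merge V (restrict m V) (restrict m G) = m"
  using assms unfolding mems_iff merge_def restrict_def by (auto intro!: ext)

lemma restrict_mems:
  assumes "m \<in> mems tp V" "A \<subseteq> V"
  shows "restrict m A \<in> mems tp A"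
  using assms unfolding mems_iff restrict_def by auto

lemma mems_nonempty:
  assumes "\<forall>v. tp v \<noteq> {}"
  shows "\<exists>c. c \<in> mems tp V"
  using assms unfolding mems_def by (metis PiE_eq_empty_iff ex_in_conv)

lemma bij_merge:
  assumes "V \<inter> G = {}"
  shows "bij_betw (\<lambda>(a,b). merge V a b) (mems tp V \<times> mems tp G) (mems tp (V \<union> G))"
proof (rule bij_betwI[where g="\<lambda>m. (restrict m V, restrict m G)"])
  show "(\<lambda>(a, b). merge V a b) \<in> mems tp V \<times> mems tp G \<rightarrow> mems tp (V \<union> G)"
    using merge_mems by fastforce
  show "(\<lambda>m. (restrict m V, restrict m G)) \<in> mems tp (V \<union> G) \<rightarrow> mems tp V \<times> mems tp G"
    using restrict_mems by fastforce
  show "(\<lambda>m. (restrict m V, restrict m G)) ((\<lambda>(a, b). merge V a b) x) = x" if "x \<in> mems tp V \<times> mems tp G" for x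
  proof -
    obtain a b where x0: "x = (a,b)" by (cases x)
    have x: "x = (a,b)" "a \<in> mems tp V" "b \<in> mems tp G" using that x0 by auto
    show ?thesis unfolding x(1) using restrict_merge1[OF x(2)] restrict_merge2[OF x(3) assms] by simp
  qed
  show "(\<lambda>(a, b). merge V a b) (restrict y V, restrict y G) = y" if "y \<in> mems tp (V \<union> G)" for y
    using that merge_restrict by (metis case_prod_conv)
qed

lemma has_sum_mems_Un:
  assumes "V \<inter> G = {}"
  shows "((\<lambda>(a,b). f (merge V a b)) has_sum s) (mems tp V \<times> mems tp G) \<longleftrightarrow> (f has_sum s) (mems tp (V \<union> G))"
proof -
  have "((\<lambda>x. f ((\<lambda>(a,b). merge V a b) x)) has_sum s) (mems tp V \<times> mems tp G) \<longleftrightarrow> (f has_sum s) (mems tp (V \<union> G))"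
    by (rule has_sum_reindex_bij_betw[OF bij_merge[OF assms]])
  moreover have "(\<lambda>x. f ((\<lambda>(a,b). merge V a b) x)) = (\<lambda>(a,b). f (merge V a b))" by (simp add: case_prod_beta')
  ultimately show ?thesis by simp
qed

lemma summable_mems_Un:
  assumes "V \<inter> G = {}"
  shows "(\<lambda>(a,b). f (merge V a b)) summable_on (mems tp V \<times> mems tp G) \<longleftrightarrow> f summable_on (mems tp (V \<union> G))"
  unfolding summable_on_def has_sum_mems_Un[where f=f, OF assms] ..

lemma infsum_mems_Un:
  assumes "V \<inter> G = {}"
  shows "infsum (\<lambda>(a,b). f (merge V a b)) (mems tp V \<times> mems tp G) = infsum f (mems tp (V \<union> G))"
proof (cases "f summable_on (mems tp (V \<union> G))")
  case True
  then have h: "(f has_sum infsum f (mems tp (V \<union> G))) (mems tp (V \<union> G))" by (rule has_sum_infsum)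
  have "((\<lambda>(a,b). f (merge V a b)) has_sum infsum f (mems tp (V \<union> G))) (mems tp V \<times> mems tp G)"
    using has_sum_mems_Un[where f=f, OF assms] h by blast
  then show ?thesis by (rule infsumI)
next
  case False
  then have "\<not> (\<lambda>(a,b). f (merge V a b)) summable_on (mems tp V \<times> mems tp G)"
    using summable_mems_Un[where f=f, OF assms] by blast
  then show ?thesis using False infsum_not_exists by metis
qed

lemma infsum_mems_Un_iter:
  fixes f :: "_ \<Rightarrow> 'b::banach"
  assumes "V \<inter> G = {}" "f summable_on mems tp (V \<union> G)"
  shows "infsum (\<lambda>a. infsum (\<lambda>b. f (merge V a b)) (mems tp G)) (mems tp V) = infsum f (mems tp (V \<union> G))"
proof -
  have s: "(\<lambda>(a,b). f (merge V a b)) summable_on (mems tp V \<times> mems tp G)"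
    using summable_mems_Un[where f=f, OF assms(1)] assms(2) by blast
  show ?thesis
    using infsum_Sigma'_banach[OF s] infsum_mems_Un[OF assms(1), of f tp] by simp
qed

lemma summable_mems_Un_iter:
  fixes f :: "_ \<Rightarrow> 'b::banach"
  assumes "V \<inter> G = {}" "f summable_on mems tp (V \<union> G)"
  shows "(\<lambda>a. infsum (\<lambda>b. f (merge V a b)) (mems tp G)) summable_on (mems tp V)"
proof -
  have s: "(\<lambda>(a,b). f (merge V a b)) summable_on (mems tp V \<times> mems tp G)"
    using summable_mems_Un[where f=f, OF assms(1)] assms(2) by blast
  show ?thesis
    using summable_on_Sigma_banach[OF s] by simp
qed

lemma summable_mems_Un_slice:
  fixes f :: "_ \<Rightarrow> 'b::{banach,uniform_topological_group_add}"
  assumes "V \<inter> G = {}" "f summable_on mems tp (V \<union> G)" "a \<in> mems tp V"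
  shows "(\<lambda>b. f (merge V a b)) summable_on (mems tp G)"
proof -
  have s: "(\<lambda>(a,b). f (merge V a b)) summable_on (mems tp V \<times> mems tp G)"
    using summable_mems_Un[where f=f, OF assms(1)] assms(2) by blast
  show ?thesis
    using summable_on_SigmaD1[OF s assms(3)] by simp
qed

lemma inj_merge_fixed:
  "inj_on (\<lambda>a. merge V a c) (mems tp V)"
proof (rule inj_onI)
  fix a a' assume "a \<in> mems tp V" "a' \<in> mems tp V" "merge V a c = merge V a' c"
  then have "restrict (merge V a c) V = a" "restrict (merge V a' c) V = a'"
    "restrict (merge V a c) V = restrict (merge V a' c) V"
    using restrict_merge1 by (blast, blast, presburger)
  then show "a = a'" by argo
qed

lemma has_sum_slice_fixed:
  assumes "V \<inter> G = {}" "c \<in> mems tp G"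
    and zero: "\<And>m. m \<in> mems tp (V \<union> G) \<Longrightarrow> restrict m G \<noteq> c \<Longrightarrow> f m = 0"
  shows "((\<lambda>a. f (merge V a c)) has_sum s) (mems tp V) \<longleftrightarrow> (f has_sum s) (mems tp (V \<union> G))"
proof -
  let ?S = "(\<lambda>a. merge V a c) ` mems tp V"
  have "((\<lambda>a. f (merge V a c)) has_sum s) (mems tp V) \<longleftrightarrow> (f has_sum s) ?S"
    using has_sum_reindex[OF inj_merge_fixed, where g=f and x=s] by (simp add: comp_def)
  also have "\<dots> \<longleftrightarrow> (f has_sum s) (mems tp (V \<union> G))"
  proof (rule has_sum_cong_neutral)
    show "f x = 0" if "x \<in> mems tp (V \<union> G) - ?S" for x
    proof (rule zero)
      show xm: "x \<in> mems tp (V \<union> G)" using that by blast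
      show "restrict x G \<noteq> c"
      proof
        assume "restrict x G = c"
        then have "x = merge V (restrict x V) c" using merge_restrict[OF xm] by simp
        moreover have "restrict x V \<in> mems tp V" using xm by (rule restrict_mems) blast
        ultimately have "x \<in> ?S" by blast
        then show False using that by blast
      qed
    qed
    show "f x = 0" if "x \<in> ?S - mems tp (V \<union> G)" for x
    proof -
      from that have "x \<in> ?S" by blast
      then obtain a where "a \<in> mems tp V" "x = merge V a c" by (rule imageE) simp
      then have "x \<in> mems tp (V \<union> G)" using merge_mems[OF _ assms(2)] by blast
      then show ?thesis using that by blast
    qed
  qed simp
  finally show ?thesis .
qed

lemma summable_slice_fixed:
  assumes "V \<inter> G = {}" "c \<in> mems tp G"
    and zero: "\<And>m. m \<in> mems tp (V \<union> G) \<Longrightarrow> restrict m G \<noteq> c \<Longrightarrow> f m = 0"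
  shows "(\<lambda>a. f (merge V a c)) summable_on (mems tp V) \<longleftrightarrow> f summable_on (mems tp (V \<union> G))"
proof
  assume "(\<lambda>a. f (merge V a c)) summable_on (mems tp V)"
  then obtain s where "((\<lambda>a. f (merge V a c)) has_sum s) (mems tp V)" unfolding summable_on_def by blast
  then have "(f has_sum s) (mems tp (V \<union> G))" using has_sum_slice_fixed[where f=f and s=s, OF assms] by blast
  then show "f summable_on (mems tp (V \<union> G))" unfolding summable_on_def by blast
next
  assume "f summable_on (mems tp (V \<union> G))"
  then obtain s where "(f has_sum s) (mems tp (V \<union> G))" unfolding summable_on_def by blast
  then have "((\<lambda>a. f (merge V a c)) has_sum s) (mems tp V)" using has_sum_slice_fixed[where f=f and s=s, OF assms] by blast
  then show "(\<lambda>a. f (merge V a c)) summable_on (mems tp V)" unfolding summable_on_def by blast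
qed

lemma infsum_slice_fixed:
  assumes "V \<inter> G = {}" "c \<in> mems tp G"
    and zero: "\<And>m. m \<in> mems tp (V \<union> G) \<Longrightarrow> restrict m G \<noteq> c \<Longrightarrow> f m = 0"
  shows "infsum (\<lambda>a. f (merge V a c)) (mems tp V) = infsum f (mems tp (V \<union> G))"
proof (cases "f summable_on (mems tp (V \<union> G))")
  case True
  then have h: "(f has_sum infsum f (mems tp (V \<union> G))) (mems tp (V \<union> G))" by (rule has_sum_infsum)
  have "((\<lambda>a. f (merge V a c)) has_sum infsum f (mems tp (V \<union> G))) (mems tp V)"
    using has_sum_slice_fixed[where f=f and s="infsum f (mems tp (V \<union> G))", OF assms] h by blast
  then show ?thesis by (rule infsumI)
next
  case False
  then have "\<not> (\<lambda>a. f (merge V a c)) summable_on (mems tp V)"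
    using summable_slice_fixed[where f=f, OF assms] by blast
  then show ?thesis using False infsum_not_exists by metis
qed

section \<open>Cauchy-Schwarz for infinite sums\<close>

lemma CS_real:
  fixes f g :: "'a \<Rightarrow> real"
  assumes sf: "(\<lambda>x. (f x)^2) summable_on A" and sg: "(\<lambda>x. (g x)^2) summable_on A"
    and f0: "\<And>x. x \<in> A \<Longrightarrow> f x \<ge> 0" and g0: "\<And>x. x \<in> A \<Longrightarrow> g x \<ge> 0"
  shows "(\<lambda>x. f x * g x) summable_on A"
    and "infsum (\<lambda>x. f x * g x) A \<le> sqrt (infsum (\<lambda>x. (f x)^2) A) * sqrt (infsum (\<lambda>x. (g x)^2) A)"
proof -
  let ?B = "sqrt (infsum (\<lambda>x. (f x)^2) A) * sqrt (infsum (\<lambda>x. (g x)^2) A)"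
  have fin: "sum (\<lambda>x. f x * g x) F \<le> ?B" if "finite F" "F \<subseteq> A" for F
  proof -
    have "sum (\<lambda>x. f x * g x) F = (\<Sum>i\<in>F. \<bar>f i\<bar> * \<bar>g i\<bar>)"
      using that f0 g0 by (intro sum.cong) auto
    also have "\<dots> \<le> L2_set f F * L2_set g F" by (rule L2_set_mult_ineq)
    also have "\<dots> \<le> ?B"
    proof (rule mult_mono)
      have "sum (\<lambda>x. (f x)^2) F \<le> infsum (\<lambda>x. (f x)^2) A"
        by (rule finite_sum_le_infsum[OF sf that]) simp
      then show "L2_set f F \<le> sqrt (infsum (\<lambda>x. (f x)^2) A)" unfolding L2_set_def by simp
      have "sum (\<lambda>x. (g x)^2) F \<le> infsum (\<lambda>x. (g x)^2) A"
        by (rule finite_sum_le_infsum[OF sg that]) simp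
      then show "L2_set g F \<le> sqrt (infsum (\<lambda>x. (g x)^2) A)" unfolding L2_set_def by simp
    qed (auto simp: L2_set_def intro!: sum_nonneg infsum_nonneg)
    finally show ?thesis .
  qed
  show s: "(\<lambda>x. f x * g x) summable_on A"
  proof (rule nonneg_bdd_above_summable_on)
    show "0 \<le> f x * g x" if "x \<in> A" for x using that f0 g0 by simp
    show "bdd_above (sum (\<lambda>x. f x * g x) ` {F. F \<subseteq> A \<and> finite F})"
      using fin by (intro bdd_aboveI[where M="?B"]) blast
  qed
  show "infsum (\<lambda>x. f x * g x) A \<le> ?B"
    by (rule infsum_le_finite_sums[OF s fin])
qed

lemma CS_complex:
  fixes a b :: "'a \<Rightarrow> complex"
  assumes sa: "(\<lambda>x. (cmod (a x))^2) summable_on A" and sb: "(\<lambda>x. (cmod (b x))^2) summable_on A"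
  shows "(\<lambda>x. a x * b x) summable_on A"
    and "(\<lambda>x. cmod (a x) * cmod (b x)) summable_on A"
    and "cmod (infsum (\<lambda>x. a x * b x) A) \<le> sqrt (infsum (\<lambda>x. (cmod (a x))^2) A) * sqrt (infsum (\<lambda>x. (cmod (b x))^2) A)"
proof -
  note cs = CS_real[of "\<lambda>x. cmod (a x)" A "\<lambda>x. cmod (b x)", OF sa sb]
  show s1: "(\<lambda>x. cmod (a x) * cmod (b x)) summable_on A" using cs(1) by simp
  then have s2: "(\<lambda>x. norm (a x * b x)) summable_on A" by (simp add: norm_mult)
  then show "(\<lambda>x. a x * b x) summable_on A"
    using summable_on_iff_abs_summable_on_complex by blast
  have "cmod (infsum (\<lambda>x. a x * b x) A) \<le> infsum (\<lambda>x. norm (a x * b x)) A"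
    by (rule norm_infsum_bound[OF s2])
  also have "\<dots> = infsum (\<lambda>x. cmod (a x) * cmod (b x)) A" by (simp add: norm_mult)
  also have "\<dots> \<le> sqrt (infsum (\<lambda>x. (cmod (a x))^2) A) * sqrt (infsum (\<lambda>x. (cmod (b x))^2) A)"
    using cs(2) by simp
  finally show "cmod (infsum (\<lambda>x. a x * b x) A) \<le> sqrt (infsum (\<lambda>x. (cmod (a x))^2) A) * sqrt (infsum (\<lambda>x. (cmod (b x))^2) A)" .
qed

lemma infsum_fin_supp:
  assumes "finite F" "F \<subseteq> A" "\<And>x. x \<in> A \<Longrightarrow> x \<notin> F \<Longrightarrow> f x = 0"
  shows "infsum f A = sum f F"
proof -
  have "infsum f A = infsum f F"
    by (rule infsum_cong_neutral) (use assms in auto)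
  then show ?thesis using assms(1) by simp
qed

lemma summable_fin_supp:
  assumes "finite F" "F \<subseteq> A" "\<And>x. x \<in> A \<Longrightarrow> x \<notin> F \<Longrightarrow> f x = 0"
  shows "f summable_on A"
proof -
  have "f summable_on F" using assms(1) by simp
  then show ?thesis
    by (rule summable_on_cong_neutral[THEN iffD1, rotated -1]) (use assms in auto)
qed

lemma l2_fin_supp:
  assumes "finite F" "F \<subseteq> mems tp V" "\<And>m. m \<notin> F \<Longrightarrow> \<psi> m = 0"
  shows "\<psi> \<in> l2 tp V"
  unfolding l2_def
proof (intro CollectI conjI allI impI)
  show "\<psi> m = 0" if "m \<notin> mems tp V" for m using that assms by blast
  show "(\<lambda>m. (cmod (\<psi> m))\<^sup>2) summable_on mems tp V"
    by (rule summable_fin_supp[OF assms(1,2)]) (use assms(3) in simp)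
qed

lemma l2inner_fin:
  assumes "finite F" "F \<subseteq> mems tp V" "\<And>m. m \<notin> F \<Longrightarrow> \<psi> m = 0"
  shows "l2inner tp V \<psi> \<xi> = (\<Sum>m\<in>F. cnj (\<psi> m) * \<xi> m)"
  unfolding l2inner_def by (rule infsum_fin_supp[OF assms(1,2)]) (use assms(3) in simp)

lemma qapply_fin:
  assumes "finite F" "F \<subseteq> mems tp V" "\<And>m. m \<notin> F \<Longrightarrow> \<psi> m = 0" "m \<in> mems tp V"
  shows "qapply tp V K \<psi> m = (\<Sum>m'\<in>F. K m m' * \<psi> m')"
  unfolding qapply_def using assms(4) by simp (rule infsum_fin_supp[OF assms(1,2)], use assms(3) in simp)

lemma psd2_algebra:
  fixes p q :: real and x y :: complex
  assumes H: "\<And>\<alpha> \<beta>. Im (cnj \<alpha> * (of_real p * \<alpha> + x * \<beta>) + cnj \<beta> * (y * \<alpha> + of_real q * \<beta>)) = 0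
     \<and> Re (cnj \<alpha> * (of_real p * \<alpha> + x * \<beta>) + cnj \<beta> * (y * \<alpha> + of_real q * \<beta>)) \<ge> 0"
  shows "(cmod x)^2 \<le> p * q"
proof -
  obtain u v where x: "x = Complex u v" by (cases x)
  obtain u' v' where y: "y = Complex u' v'" by (cases y)
  have h1: "v + v' = 0" using H[of 1 1] unfolding x y by simp
  have h2: "u - u' = 0" using H[of 1 "\<i>"] unfolding x y by simp
  have p0: "p \<ge> 0" using H[of 1 0] by simp
  have q0: "q \<ge> 0" using H[of 0 1] by simp
  have main: "s * s * p - 2 * s * (u * u + v * v) + (u * u+v * v) * q \<ge> 0" for s :: real
  proof -
    have "Re (cnj (of_real s) * (of_real p * of_real s + x * (- cnj x)) + cnj (- cnj x) * (y * of_real s + of_real q * (- cnj x))) \<ge> 0"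
      using H by blast
    moreover have "Re (cnj (of_real s) * (of_real p * of_real s + x * (- cnj x)) + cnj (- cnj x) * (y * of_real s + of_real q * (- cnj x)))
        = s * s * p - 2 * s * (u * u + v * v) + (u * u+v * v) * q"
    proof -
      have v': "v' = - v" using h1 by simp
      have u': "u' = u" using h2 by simp
      show ?thesis unfolding x y v' u' by (simp add: algebra_simps)
    qed
    ultimately show ?thesis by simp
  qed
  define X where "X = u * u + v * v"
  have X0: "X \<ge> 0" unfolding X_def by simp
  have "X \<le> p * q"
  proof (cases "X = 0")
    case True then show ?thesis using p0 q0 by simp
  next
    case False
    then have Xp: "X > 0" using X0 by simp
    show ?thesis
    proof (cases "p = 0")
      case True
      have "(q+1) * (q+1) * p - 2 * (q+1) * X + X * q \<ge> 0" using main[of "q+1"] unfolding X_def .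
      then have "(2 * q + 2) * X \<le> X * q" using True by (simp add: algebra_simps)
      then have "(q + 2) * X \<le> 0" by (simp add: algebra_simps)
      moreover have "(q + 2) * X > 0" using Xp q0 by simp
      ultimately show ?thesis by simp
    next
      case False
      then have pp: "p > 0" using p0 by simp
      have "(X/p) * (X/p) * p - 2 * (X/p) * X + X * q \<ge> 0" using main[of "X/p"] unfolding X_def .
      then have "X * q - X * X / p \<ge> 0" using pp by (simp add: field_simps power2_eq_square)
      then have "X * q * p - X * X \<ge> 0" using pp by (simp add: field_simps)
      then have "X * (q * p - X) \<ge> 0" by (simp add: algebra_simps)
      then show ?thesis using Xp by (simp add: zero_le_mult_iff mult.commute)
    qed
  qed
  then show ?thesis unfolding X_def x by (simp add: cmod_def power2_eq_square)
qed

section \<open>Mixed memories: basic entry facts\<close>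

lemma mixed_zero:
  assumes "mixed tp V K" "m \<notin> mems tp V \<or> m' \<notin> mems tp V"
  shows "K m m' = 0"
  using assms unfolding mixed_def by blast

lemma mixed_pos:
  assumes "mixed tp V K" "\<psi> \<in> l2 tp V"
  shows "Im (l2inner tp V \<psi> (qapply tp V K \<psi>)) = 0" "Re (l2inner tp V \<psi> (qapply tp V K \<psi>)) \<ge> 0"
  using assms unfolding mixed_def by blast+

lemma mixed_pos2:
  assumes K: "mixed tp V K" and a: "a \<in> mems tp V" and b: "b \<in> mems tp V" and ab: "a \<noteq> b"
  shows "Im (cnj \<alpha> * (K a a * \<alpha> + K a b * \<beta>) + cnj \<beta> * (K b a * \<alpha> + K b b * \<beta>)) = 0
     \<and> Re (cnj \<alpha> * (K a a * \<alpha> + K a b * \<beta>) + cnj \<beta> * (K b a * \<alpha> + K b b * \<beta>)) \<ge> 0"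
proof -
  define \<psi> where "\<psi> = (\<lambda>m. if m = a then \<alpha> else if m = b then \<beta> else 0)"
  have F: "finite {a,b}" "{a,b} \<subseteq> mems tp V" using a b by auto
  have z: "\<And>m. m \<notin> {a,b} \<Longrightarrow> \<psi> m = 0" unfolding \<psi>_def by auto
  have l2: "\<psi> \<in> l2 tp V" by (rule l2_fin_supp[OF F z])
  have qa: "qapply tp V K \<psi> a = K a a * \<alpha> + K a b * \<beta>"
    using qapply_fin[OF F z a] ab unfolding \<psi>_def by simp
  have qb: "qapply tp V K \<psi> b = K b a * \<alpha> + K b b * \<beta>"
    using qapply_fin[OF F z b] ab unfolding \<psi>_def by simp
  have "l2inner tp V \<psi> (qapply tp V K \<psi>) = cnj \<alpha> * (K a a * \<alpha> + K a b * \<beta>) + cnj \<beta> * (K b a * \<alpha> + K b b * \<beta>)"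
    using l2inner_fin[OF F z] ab qa qb unfolding \<psi>_def by simp
  then show ?thesis using mixed_pos[OF K l2] by simp
qed

lemma mixed_diag:
  assumes K: "mixed tp V K"
  shows "Im (K a a) = 0" "Re (K a a) \<ge> 0"
proof -
  have "Im (K a a) = 0 \<and> Re (K a a) \<ge> 0"
  proof (cases "a \<in> mems tp V")
    case True
    define \<psi> where "\<psi> = (\<lambda>m. if m = a then (1::complex) else 0)"
    have F: "finite {a}" "{a} \<subseteq> mems tp V" using True by auto
    have z: "\<And>m. m \<notin> {a} \<Longrightarrow> \<psi> m = 0" unfolding \<psi>_def by auto
    have l2: "\<psi> \<in> l2 tp V" by (rule l2_fin_supp[OF F z])
    have qa: "qapply tp V K \<psi> a = K a a"
      using qapply_fin[OF F z True] unfolding \<psi>_def by simp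
    have "l2inner tp V \<psi> (qapply tp V K \<psi>) = K a a"
      using l2inner_fin[OF F z] qa unfolding \<psi>_def by simp
    then show ?thesis using mixed_pos[OF K l2] by simp
  next
    case False
    then show ?thesis using mixed_zero[OF K] by simp
  qed
  then show "Im (K a a) = 0" "Re (K a a) \<ge> 0" by auto
qed

lemma mixed_diag_real:
  assumes K: "mixed tp V K"
  shows "K a a = of_real (Re (K a a))"
  using mixed_diag[OF K, of a] by (simp add: complex_eq_iff)

lemma mixed_off:
  assumes K: "mixed tp V K"
  shows "(cmod (K a b))^2 \<le> Re (K a a) * Re (K b b)"
proof (cases "a \<in> mems tp V \<and> b \<in> mems tp V")
  case True
  show ?thesis
  proof (cases "a = b")
    case True
    have "(cmod (K a a))^2 = (Re (K a a))^2 + (Im (K a a))^2" by (rule cmod_power2)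
    then show ?thesis using True mixed_diag[OF K, of a] by (simp add: power2_eq_square)
  next
    case False
    show ?thesis
    proof (rule psd2_algebra[where y="K b a"])
      fix \<alpha> \<beta> :: complex
      show "Im (cnj \<alpha> * (complex_of_real (Re (K a a)) * \<alpha> + K a b * \<beta>) + cnj \<beta> * (K b a * \<alpha> + complex_of_real (Re (K b b)) * \<beta>)) = 0 \<and>
            0 \<le> Re (cnj \<alpha> * (complex_of_real (Re (K a a)) * \<alpha> + K a b * \<beta>) + cnj \<beta> * (K b a * \<alpha> + complex_of_real (Re (K b b)) * \<beta>))"
        using mixed_pos2[OF K _ _ False, of \<alpha> \<beta>] True
        mixed_diag_real[OF K, of a] mixed_diag_real[OF K, of b] by metis
    qed
  qed
next
  case False
  then show ?thesis using mixed_zero[OF K] mixed_diag[OF K] by auto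
qed

lemma mixed_off_sqrt:
  assumes K: "mixed tp V K"
  shows "cmod (K a b) \<le> sqrt (Re (K a a)) * sqrt (Re (K b b))"
proof -
  have "sqrt ((cmod (K a b))^2) \<le> sqrt (Re (K a a) * Re (K b b))"
    using mixed_off[OF K] real_sqrt_le_mono by blast
  then show ?thesis by (simp add: real_sqrt_mult)
qed

lemma sqrt_mult_le_avg:
  assumes "x \<ge> 0" "y \<ge> 0"
  shows "sqrt x * sqrt y \<le> (x + y) / 2"
proof -
  have "0 \<le> (sqrt x - sqrt y)^2" by simp
  then have "2 * (sqrt x * sqrt y) \<le> (sqrt x)^2 + (sqrt y)^2" by (simp add: power2_diff)
  then show ?thesis using assms by simp
qed

lemma mixed_off_avg:
  assumes K: "mixed tp V K"
  shows "cmod (K a b) \<le> (Re (K a a) + Re (K b b)) / 2"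
  using mixed_off_sqrt[OF K, of a b] sqrt_mult_le_avg[OF mixed_diag(2)[OF K, of a] mixed_diag(2)[OF K, of b]]
  by linarith

lemma summable_product_nonneg:
  fixes g h :: "_ \<Rightarrow> real"
  assumes g: "g summable_on A" and h: "h summable_on B"
    and g0: "\<And>x. x \<in> A \<Longrightarrow> g x \<ge> 0" and h0: "\<And>y. y \<in> B \<Longrightarrow> h y \<ge> 0"
  shows "(\<lambda>(x,y). g x * h y) summable_on A \<times> B"
proof -
  have "(\<lambda>p. g (fst p) * h (snd p)) summable_on Sigma A (\<lambda>_. B)"
  proof (rule summable_on_SigmaI[where g="\<lambda>x. g x * infsum h B"])
    show "((\<lambda>y. g (fst (x, y)) * h (snd (x, y))) has_sum g x * infsum h B) B" if "x \<in> A" for x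
      using has_sum_cmult_right[OF has_sum_infsum[OF h], of "g x"] by simp
    show "(\<lambda>x. g x * infsum h B) summable_on A"
      using summable_on_cmult_left[OF g] .
    show "0 \<le> g (fst (x, y)) * h (snd (x, y))" if "x \<in> A" "y \<in> B" for x y
      using that g0 h0 by simp
  qed
  then show ?thesis by (simp add: case_prod_beta')
qed

lemma fubini3:
  fixes f :: "'a \<times> 'b \<times> 'c \<Rightarrow> 'd::{banach,uniform_topological_group_add}"
  assumes s: "f summable_on A \<times> (B \<times> C)"
  shows "infsum f (A \<times> (B \<times> C)) = infsum (\<lambda>a. infsum (\<lambda>b. infsum (\<lambda>c. f (a,(b,c))) C) B) A"
proof -
  have s1: "(\<lambda>(a,bc). f (a,bc)) summable_on Sigma A (\<lambda>_. B \<times> C)" using s by simp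
  have sec: "(\<lambda>bc. f (a,bc)) summable_on B \<times> C" if "a \<in> A" for a
    using summable_on_SigmaD1[of "\<lambda>a bc. f (a,bc)" A "\<lambda>_. B \<times> C", OF _ that] s by simp
  have "infsum (\<lambda>a. infsum (\<lambda>b. infsum (\<lambda>c. f (a,(b,c))) C) B) A
      = infsum (\<lambda>a. infsum (\<lambda>bc. f (a,bc)) (B \<times> C)) A"
  proof (rule infsum_cong)
    fix a assume "a \<in> A"
    have "(\<lambda>(b,c). f (a,(b,c))) summable_on Sigma B (\<lambda>_. C)" using sec[OF \<open>a \<in> A\<close>] by (simp add: case_prod_beta')
    from infsum_Sigma'_banach[OF this]
    show "infsum (\<lambda>b. infsum (\<lambda>c. f (a,(b,c))) C) B = infsum (\<lambda>bc. f (a,bc)) (B \<times> C)"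
      by (simp add: case_prod_beta')
  qed
  also have "\<dots> = infsum f (A \<times> (B \<times> C))"
    using infsum_Sigma'_banach[of "\<lambda>a bc. f (a,bc)" A "\<lambda>_. B \<times> C"] s by simp
  finally show ?thesis by simp
qed

lemma triple_swap:
  fixes f :: "'a \<times> 'b \<times> 'c \<Rightarrow> 'd::{banach,uniform_topological_group_add}"
  assumes s: "f summable_on A \<times> (B \<times> C)"
  shows "infsum (\<lambda>a. infsum (\<lambda>b. infsum (\<lambda>c. f (a,(b,c))) C) B) A
       = infsum (\<lambda>c. infsum (\<lambda>a. infsum (\<lambda>b. f (a,(b,c))) B) A) C"
proof -
  define g where "g = (\<lambda>(c,(a,b)). f (a,(b,c)))"
  have eqs: "infsum g (C \<times> (A \<times> B)) = infsum f (A \<times> (B \<times> C))"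
    unfolding g_def
    by (rule infsum_reindex_bij_witness[where j="\<lambda>(c,(a,b)). (a,(b,c))" and i="\<lambda>(a,(b,c)). (c,(a,b))"]) auto
  have s2: "g summable_on C \<times> (A \<times> B)"
    unfolding g_def using s
    by (subst summable_on_reindex_bij_witness[where j="\<lambda>(c,(a,b)). (a,(b,c))" and i="\<lambda>(a,(b,c)). (c,(a,b))" and T="A \<times> (B \<times> C)" and h=f]) auto
  show ?thesis
    using fubini3[OF s] fubini3[OF s2] eqs unfolding g_def by simp
qed

section \<open>Hilbert-Schmidt type bound\<close>

lemma l2_summable: "\<psi> \<in> l2 tp V \<Longrightarrow> (\<lambda>m. (cmod (\<psi> m))^2) summable_on mems tp V"
  unfolding l2_def by blast

lemma l2_zero: "\<psi> \<in> l2 tp V \<Longrightarrow> m \<notin> mems tp V \<Longrightarrow> \<psi> m = 0"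
  unfolding l2_def by blast

lemma l2I: "(\<And>m. m \<notin> mems tp V \<Longrightarrow> \<psi> m = 0) \<Longrightarrow> (\<lambda>m. (cmod (\<psi> m))^2) summable_on mems tp V \<Longrightarrow> \<psi> \<in> l2 tp V"
  unfolding l2_def by blast

lemma l2norm_sq: "(l2norm tp V \<psi>)^2 = infsum (\<lambda>m. (cmod (\<psi> m))^2) (mems tp V)"
  unfolding l2norm_def by (simp add: infsum_nonneg)

lemma l2sum_nonneg: "infsum (\<lambda>m. (cmod (\<psi> m))^2) A \<ge> 0"
  by (rule infsum_nonneg) simp

lemma l2norm_nonneg: "l2norm tp V \<psi> \<ge> 0"
  unfolding l2norm_def using l2sum_nonneg by simp

lemma hs_bounded:
  assumes zero: "\<And>m m'. m \<notin> mems tp V \<or> m' \<notin> mems tp V \<Longrightarrow> K m m' = 0"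
    and D0: "\<And>m. D m \<ge> 0" and Ds: "D summable_on mems tp V"
    and bound: "\<And>a b. cmod (K a b) \<le> sqrt (D a) * sqrt (D b)"
  shows "(\<lambda>m'. K m m') \<in> l2 tp V"
    and "\<psi> \<in> l2 tp V \<Longrightarrow> qapply tp V K \<psi> \<in> l2 tp V
          \<and> l2norm tp V (qapply tp V K \<psi>) \<le> infsum D (mems tp V) * l2norm tp V \<psi>"
proof -
  let ?T = "infsum D (mems tp V)"
  have T0: "?T \<ge> 0" using D0 by (simp add: infsum_nonneg)
  have sq: "(cmod (K m m'))^2 \<le> D m * D m'" for m m'
  proof -
    have "(cmod (K m m'))^2 \<le> (sqrt (D m) * sqrt (D m'))^2"
      using bound[of m m'] by (simp add: power_mono)
    also have "\<dots> = D m * D m'" using D0 by (simp add: power_mult_distrib)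
    finally show ?thesis .
  qed
  have rows: "(\<lambda>m'. (cmod (K m m'))^2) summable_on mems tp V" for m
    by (rule summable_on_comparison_test[OF summable_on_cmult_right[OF Ds, of "D m"]]) (use sq in auto)
  have rowsum: "infsum (\<lambda>m'. (cmod (K m m'))^2) (mems tp V) \<le> D m * ?T" for m
  proof -
    have "infsum (\<lambda>m'. (cmod (K m m'))^2) (mems tp V) \<le> infsum (\<lambda>m'. D m * D m') (mems tp V)"
      by (rule infsum_mono[OF rows summable_on_cmult_right[OF Ds]]) (use sq in auto)
    also have "\<dots> = D m * ?T" by (simp add: infsum_cmult_right')
    finally show ?thesis .
  qed
  show "(\<lambda>m'. K m m') \<in> l2 tp V"
    by (rule l2I) (use zero rows in auto)
  assume psi: "\<psi> \<in> l2 tp V"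
  let ?N = "infsum (\<lambda>m. (cmod (\<psi> m))^2) (mems tp V)"
  have N0: "?N \<ge> 0" by (rule l2sum_nonneg)
  have pt: "(cmod (qapply tp V K \<psi> m))^2 \<le> D m * (?T * ?N)" for m
  proof (cases "m \<in> mems tp V")
    case True
    have "cmod (qapply tp V K \<psi> m) = cmod (infsum (\<lambda>m'. K m m' * \<psi> m') (mems tp V))"
      unfolding qapply_def using True by simp
    also have "\<dots> \<le> sqrt (infsum (\<lambda>m'. (cmod (K m m'))^2) (mems tp V)) * sqrt ?N"
      by (rule CS_complex(3)[OF rows l2_summable[OF psi]])
    also have "\<dots> \<le> sqrt (D m * ?T) * sqrt ?N"
      by (rule mult_right_mono) (use rowsum l2sum_nonneg in auto)
    finally have "cmod (qapply tp V K \<psi> m) \<le> sqrt (D m * ?T) * sqrt ?N" .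
    then have "(cmod (qapply tp V K \<psi> m))^2 \<le> (sqrt (D m * ?T) * sqrt ?N)^2"
      by (simp add: power_mono)
    also have "\<dots> = D m * (?T * ?N)" using D0[of m] T0 N0 by (simp add: power_mult_distrib)
    finally show ?thesis .
  next
    case False
    then show ?thesis unfolding qapply_def using D0[of m] T0 N0 by simp
  qed
  have s: "(\<lambda>m. (cmod (qapply tp V K \<psi> m))^2) summable_on mems tp V"
    by (rule summable_on_comparison_test[OF summable_on_cmult_left[OF Ds, of "?T * ?N"]]) (use pt in auto)
  show "qapply tp V K \<psi> \<in> l2 tp V \<and> l2norm tp V (qapply tp V K \<psi>) \<le> ?T * l2norm tp V \<psi>"
  proof
    show "qapply tp V K \<psi> \<in> l2 tp V" by (rule l2I) (use s in \<open>auto simp: qapply_def\<close>)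
    have "infsum (\<lambda>m. (cmod (qapply tp V K \<psi> m))^2) (mems tp V) \<le> infsum (\<lambda>m. D m * (?T * ?N)) (mems tp V)"
      by (rule infsum_mono[OF s summable_on_cmult_left[OF Ds]]) (use pt in auto)
    also have "\<dots> = ?T * ?T * ?N" by (simp add: infsum_cmult_left')
    finally have "(l2norm tp V (qapply tp V K \<psi>))^2 \<le> (?T * l2norm tp V \<psi>)^2"
      unfolding l2norm_sq power_mult_distrib by (simp add: power2_eq_square)
    then show "l2norm tp V (qapply tp V K \<psi>) \<le> ?T * l2norm tp V \<psi>"
      using T0 l2norm_nonneg by (meson mult_nonneg_nonneg power2_le_imp_le)
  qed
qed

lemma l2_zero_vec: "(\<lambda>_. 0) \<in> l2 tp V"
  by (rule l2I) auto

lemma l2_add: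
  assumes "\<phi> \<in> l2 tp V" "\<psi> \<in> l2 tp V"
  shows "(\<lambda>m. \<phi> m + \<psi> m) \<in> l2 tp V"
proof (rule l2I)
  show "\<phi> m + \<psi> m = 0" if "m \<notin> mems tp V" for m using that assms l2_zero by (metis add.right_neutral)
  have b: "(cmod (\<phi> m + \<psi> m))^2 \<le> 2 * (cmod (\<phi> m))^2 + 2 * (cmod (\<psi> m))^2" for m
  proof -
    have "cmod (\<phi> m + \<psi> m) \<le> cmod (\<phi> m) + cmod (\<psi> m)" by (rule norm_triangle_ineq)
    then have "(cmod (\<phi> m + \<psi> m))^2 \<le> (cmod (\<phi> m) + cmod (\<psi> m))^2" by (simp add: power_mono)
    also have "\<dots> \<le> 2 * (cmod (\<phi> m))^2 + 2 * (cmod (\<psi> m))^2"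
      by (smt (verit, best) sum_squares_bound power2_sum)
    finally show ?thesis .
  qed
  have s: "(\<lambda>m. 2 * (cmod (\<phi> m))^2 + 2 * (cmod (\<psi> m))^2) summable_on mems tp V"
    by (intro summable_on_add summable_on_cmult_right l2_summable assms)
  show "(\<lambda>m. (cmod (\<phi> m + \<psi> m))\<^sup>2) summable_on mems tp V"
    by (rule summable_on_comparison_test[OF s]) (use b in auto)
qed

lemma l2_scale:
  assumes "\<phi> \<in> l2 tp V"
  shows "(\<lambda>m. c * \<phi> m) \<in> l2 tp V"
proof (rule l2I)
  show "c * \<phi> m = 0" if "m \<notin> mems tp V" for m using l2_zero[OF assms that] by simp
  have "(\<lambda>m. (cmod c)^2 * (cmod (\<phi> m))^2) summable_on mems tp V"
    by (intro summable_on_cmult_right l2_summable assms)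
  then show "(\<lambda>m. (cmod (c * \<phi> m))\<^sup>2) summable_on mems tp V"
    by (simp add: norm_mult power_mult_distrib)
qed

lemma l2_diff:
  assumes "\<phi> \<in> l2 tp V" "\<psi> \<in> l2 tp V"
  shows "(\<lambda>m. \<phi> m - \<psi> m) \<in> l2 tp V"
  using l2_add[OF assms(1) l2_scale[OF assms(2), of "-1"]] by simp

lemma l2norm_zero: "l2norm tp V (\<lambda>_. 0) = 0"
  unfolding l2norm_def by simp

lemma l2norm_lt:
  assumes "infsum (\<lambda>m. (cmod (\<psi> m))^2) (mems tp V) < e^2" "e > 0"
  shows "l2norm tp V \<psi> < e"
  unfolding l2norm_def using assms real_sqrt_less_mono[OF assms(1)] by simp

lemma l2norm_le_iff:
  assumes "e \<ge> 0"
  shows "l2norm tp V \<psi> \<le> e \<longleftrightarrow> infsum (\<lambda>m. (cmod (\<psi> m))^2) (mems tp V) \<le> e^2"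
  unfolding l2norm_def using assms l2sum_nonneg
  by (metis real_le_lsqrt sqrt_le_D)

definition cclosed :: "('v \<Rightarrow> 'val set) \<Rightarrow> 'v set \<Rightarrow> ('v,'val) qvec set \<Rightarrow> bool" where
  "cclosed tp V A \<longleftrightarrow> (\<lambda>_. 0) \<in> A
    \<and> (\<forall>\<phi>\<in>A. \<forall>\<psi>\<in>A. (\<lambda>m. \<phi> m + \<psi> m) \<in> A)
    \<and> (\<forall>c. \<forall>\<phi>\<in>A. (\<lambda>m. c * \<phi> m) \<in> A)
    \<and> (\<forall>\<psi>\<in>l2 tp V. (\<forall>\<epsilon>>0. \<exists>\<phi>\<in>A. l2norm tp V (\<lambda>m. \<psi> m - \<phi> m) < \<epsilon>) \<longrightarrow> \<psi> \<in> A)"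

lemma cclosedD:
  assumes "cclosed tp V A"
  shows "(\<lambda>_. 0) \<in> A" "\<phi> \<in> A \<Longrightarrow> \<psi> \<in> A \<Longrightarrow> (\<lambda>m. \<phi> m + \<psi> m) \<in> A"
    "\<phi> \<in> A \<Longrightarrow> (\<lambda>m. c * \<phi> m) \<in> A"
    "\<psi> \<in> l2 tp V \<Longrightarrow> (\<And>\<epsilon>. \<epsilon> > 0 \<Longrightarrow> \<exists>\<phi>\<in>A. l2norm tp V (\<lambda>m. \<psi> m - \<phi> m) < \<epsilon>) \<Longrightarrow> \<psi> \<in> A"
  using assms unfolding cclosed_def by blast+

lemma csubspace_cclosed: "csubspace tp V S \<Longrightarrow> cclosed tp V S"
  unfolding csubspace_def cclosed_def by blast

lemma cclosed_sum:
  assumes A: "cclosed tp V A" and "finite F" and "\<And>i. i \<in> F \<Longrightarrow> f i \<in> A"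
  shows "(\<lambda>m. \<Sum>i\<in>F. f i m) \<in> A"
  using assms(2,3)
proof (induction F rule: finite_induct)
  case empty
  then show ?case using cclosedD(1)[OF A] by simp
next
  case (insert x F)
  have "(\<lambda>m. f x m + (\<Sum>i\<in>F. f i m)) \<in> A"
    using cclosedD(2)[OF A] insert by simp
  then show ?case using insert by simp
qed

definition qprod :: "('v \<Rightarrow> 'val set) \<Rightarrow> 'v set \<Rightarrow> 'v set \<Rightarrow> ('v,'val) qvec \<Rightarrow> ('v,'val) qvec \<Rightarrow> ('v,'val) qvec" where
  "qprod tp V W \<phi> \<xi> = (\<lambda>m. if m \<in> mems tp V then \<phi> (restrict m W) * \<xi> (restrict m (V - W)) else 0)"

lemma qin_alt: "qin tp V W S = \<Inter>{T. csubspace tp V T \<and> (\<forall>\<phi>\<in>S. \<forall>\<xi>\<in>l2 tp (V - W). qprod tp V W \<phi> \<xi> \<in> T)}"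
  unfolding qin_def qprod_def ..

lemma qin_cclosed: "cclosed tp V (qin tp V W S)"
  unfolding cclosed_def qin_alt
proof (intro conjI ballI allI impI)
  show "(\<lambda>_. 0) \<in> \<Inter>{T. csubspace tp V T \<and> (\<forall>\<phi>\<in>S. \<forall>\<xi>\<in>l2 tp (V - W). qprod tp V W \<phi> \<xi> \<in> T)}"
    unfolding csubspace_def by blast
  show "(\<lambda>m. \<phi> m + \<psi> m) \<in> \<Inter>{T. csubspace tp V T \<and> (\<forall>\<phi>\<in>S. \<forall>\<xi>\<in>l2 tp (V - W). qprod tp V W \<phi> \<xi> \<in> T)}"
    if "\<phi> \<in> \<Inter>{T. csubspace tp V T \<and> (\<forall>\<phi>\<in>S. \<forall>\<xi>\<in>l2 tp (V - W). qprod tp V W \<phi> \<xi> \<in> T)}"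
       "\<psi> \<in> \<Inter>{T. csubspace tp V T \<and> (\<forall>\<phi>\<in>S. \<forall>\<xi>\<in>l2 tp (V - W). qprod tp V W \<phi> \<xi> \<in> T)}" for \<phi> \<psi>
    using that unfolding csubspace_def by blast
  show "(\<lambda>m. c * \<phi> m) \<in> \<Inter>{T. csubspace tp V T \<and> (\<forall>\<phi>\<in>S. \<forall>\<xi>\<in>l2 tp (V - W). qprod tp V W \<phi> \<xi> \<in> T)}"
    if "\<phi> \<in> \<Inter>{T. csubspace tp V T \<and> (\<forall>\<phi>\<in>S. \<forall>\<xi>\<in>l2 tp (V - W). qprod tp V W \<phi> \<xi> \<in> T)}" for c \<phi>
    using that unfolding csubspace_def by blast
  show "\<psi> \<in> \<Inter>{T. csubspace tp V T \<and> (\<forall>\<phi>\<in>S. \<forall>\<xi>\<in>l2 tp (V - W). qprod tp V W \<phi> \<xi> \<in> T)}"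
    if "\<psi> \<in> l2 tp V" "\<forall>\<epsilon>>0. \<exists>\<phi>\<in>\<Inter>{T. csubspace tp V T \<and> (\<forall>\<phi>\<in>S. \<forall>\<xi>\<in>l2 tp (V - W). qprod tp V W \<phi> \<xi> \<in> T)}.
              l2norm tp V (\<lambda>m. \<psi> m - \<phi> m) < \<epsilon>" for \<psi>
  proof (rule InterI)
    fix T assume T: "T \<in> {T. csubspace tp V T \<and> (\<forall>\<phi>\<in>S. \<forall>\<xi>\<in>l2 tp (V - W). qprod tp V W \<phi> \<xi> \<in> T)}"
    then have cs: "csubspace tp V T" by blast
    have "\<forall>\<epsilon>>0. \<exists>\<phi>\<in>T. l2norm tp V (\<lambda>m. \<psi> m - \<phi> m) < \<epsilon>"
      using that(2) T by blast
    then show "\<psi> \<in> T" using cs that(1) unfolding csubspace_def by blast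
  qed
qed

lemma qin_prod:
  assumes "\<phi> \<in> S" "\<xi> \<in> l2 tp (V - W)"
  shows "qprod tp V W \<phi> \<xi> \<in> qin tp V W S"
  unfolding qin_alt using assms by blast

lemma qin_least:
  assumes "csubspace tp V T" "\<And>\<phi> \<xi>. \<phi> \<in> S \<Longrightarrow> \<xi> \<in> l2 tp (V - W) \<Longrightarrow> qprod tp V W \<phi> \<xi> \<in> T"
  shows "qin tp V W S \<subseteq> T"
  unfolding qin_alt using assms by blast

lemma csubspaceI:
  assumes "T \<subseteq> l2 tp V" "(\<lambda>_. 0) \<in> T"
    "\<And>\<phi> \<psi>. \<phi> \<in> T \<Longrightarrow> \<psi> \<in> T \<Longrightarrow> (\<lambda>m. \<phi> m + \<psi> m) \<in> T"
    "\<And>c \<phi>. \<phi> \<in> T \<Longrightarrow> (\<lambda>m. c * \<phi> m) \<in> T"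
    "\<And>\<psi>. \<psi> \<in> l2 tp V \<Longrightarrow> (\<And>\<epsilon>. \<epsilon> > 0 \<Longrightarrow> \<exists>\<phi>\<in>T. l2norm tp V (\<lambda>m. \<psi> m - \<phi> m) < \<epsilon>) \<Longrightarrow> \<psi> \<in> T"
  shows "csubspace tp V T"
  unfolding csubspace_def using assms by blast

lemma mixedI:
  assumes zero: "\<And>m m'. m \<notin> mems tp V \<or> m' \<notin> mems tp V \<Longrightarrow> K m m' = 0"
    and D0: "\<And>m. Re (K m m) \<ge> 0"
    and Ds: "(\<lambda>m. Re (K m m)) summable_on mems tp V"
    and bound: "\<And>a b. cmod (K a b) \<le> sqrt (Re (K a a)) * sqrt (Re (K b b))"
    and pos: "\<And>\<psi>. \<psi> \<in> l2 tp V \<Longrightarrow> Im (l2inner tp V \<psi> (qapply tp V K \<psi>)) = 0 \<and> Re (l2inner tp V \<psi> (qapply tp V K \<psi>)) \<ge> 0"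
  shows "mixed tp V K"
  unfolding mixed_def
proof (intro conjI allI impI)
  note hs = hs_bounded[of tp V K "\<lambda>m. Re (K m m)", OF zero D0 Ds bound]
  show "K m m' = 0" if "m \<notin> mems tp V \<or> m' \<notin> mems tp V" for m m' using zero that .
  show "(\<lambda>m'. K m m') \<in> l2 tp V" for m using hs(1) .
  show "\<exists>C. \<forall>\<psi>\<in>l2 tp V. qapply tp V K \<psi> \<in> l2 tp V \<and> l2norm tp V (qapply tp V K \<psi>) \<le> C * l2norm tp V \<psi>"
    using hs(2) by blast
  show "\<forall>\<psi>\<in>l2 tp V. Im (l2inner tp V \<psi> (qapply tp V K \<psi>)) = 0 \<and> 0 \<le> Re (l2inner tp V \<psi> (qapply tp V K \<psi>))"
    using pos by blast
  show "(\<lambda>m. Re (K m m)) summable_on mems tp V" using Ds .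
qed

lemma mixed_diag_summable: "mixed tp V K \<Longrightarrow> (\<lambda>m. Re (K m m)) summable_on mems tp V"
  unfolding mixed_def by blast

lemma mixed_bounded:
  assumes "mixed tp V K"
  shows "\<exists>C. \<forall>\<psi>\<in>l2 tp V. qapply tp V K \<psi> \<in> l2 tp V \<and> l2norm tp V (qapply tp V K \<psi>) \<le> C * l2norm tp V \<psi>"
  using assms unfolding mixed_def by blast

lemma mixed_row: "mixed tp V K \<Longrightarrow> (\<lambda>m'. K m m') \<in> l2 tp V"
  unfolding mixed_def by blast

section \<open>Lifting and slicing\<close>

lemma summable_slice_nonneg:
  fixes f :: "_ \<Rightarrow> real"
  assumes "f summable_on mems tp (V \<union> G)" "c \<in> mems tp G" "\<And>m. f m \<ge> 0"
  shows "(\<lambda>a. f (merge V a c)) summable_on (mems tp V)"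
    "infsum (\<lambda>a. f (merge V a c)) (mems tp V) \<le> infsum f (mems tp (V \<union> G))"
proof -
  let ?S = "(\<lambda>a. merge V a c) ` mems tp V"
  have sub: "?S \<subseteq> mems tp (V \<union> G)" using merge_mems[OF _ assms(2)] by blast
  have s: "f summable_on ?S" by (rule summable_on_subset[OF assms(1) sub])
  have eq: "infsum (\<lambda>a. f (merge V a c)) (mems tp V) = infsum f ?S"
    using infsum_reindex[OF inj_merge_fixed, where g=f] by (simp add: comp_def)
  show "(\<lambda>a. f (merge V a c)) summable_on (mems tp V)"
    using summable_on_reindex[OF inj_merge_fixed, where g=f] s by (simp add: comp_def)
  have "infsum f ?S \<le> infsum f (mems tp (V \<union> G))"
  proof (rule infsum_mono_neutral[OF s assms(1)])
    show "f x \<le> f x" for x by simp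
    show "f x \<le> 0" if "x \<in> ?S - mems tp (V \<union> G)" for x using that sub by blast
    show "0 \<le> f x" for x using assms(3) by simp
  qed
  then show "infsum (\<lambda>a. f (merge V a c)) (mems tp V) \<le> infsum f (mems tp (V \<union> G))"
    unfolding eq .
qed


definition liftvec :: "('v \<Rightarrow> 'val set) \<Rightarrow> 'v set \<Rightarrow> 'v set \<Rightarrow> ('v,'val) mem \<Rightarrow> ('v,'val) qvec \<Rightarrow> ('v,'val) qvec" where
  "liftvec tp V G c \<xi> = (\<lambda>m. if m \<in> mems tp (V \<union> G) \<and> restrict m G = c then \<xi> (restrict m V) else 0)"

definition slicev :: "('v \<Rightarrow> 'val set) \<Rightarrow> 'v set \<Rightarrow> ('v,'val) mem \<Rightarrow> ('v,'val) qvec \<Rightarrow> ('v,'val) qvec" where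
  "slicev tp V n \<psi> = (\<lambda>m. if m \<in> mems tp V then \<psi> (merge V m n) else 0)"

definition liftop :: "('v \<Rightarrow> 'val set) \<Rightarrow> 'v set \<Rightarrow> 'v set \<Rightarrow> ('v,'val) mem \<Rightarrow> ('v,'val) qop \<Rightarrow> ('v,'val) qop" where
  "liftop tp V G c K = (\<lambda>m m'. if m \<in> mems tp (V \<union> G) \<and> m' \<in> mems tp (V \<union> G) \<and> restrict m G = c \<and> restrict m' G = c
      then K (restrict m V) (restrict m' V) else 0)"

lemma merge_facts:
  assumes "a \<in> mems tp V" "c \<in> mems tp G" "V \<inter> G = {}"
  shows "merge V a c \<in> mems tp (V \<union> G)" "restrict (merge V a c) G = c" "restrict (merge V a c) V = a"
  using merge_mems[OF assms(1,2)] restrict_merge2[OF assms(2,3)] restrict_merge1[OF assms(1)] by auto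

context
  fixes tp :: "'v \<Rightarrow> 'val set" and V G :: "'v set" and c :: "('v,'val) mem"
  assumes disj: "V \<inter> G = {}" and c: "c \<in> mems tp G"
begin

lemma liftvec_merge: "a \<in> mems tp V \<Longrightarrow> liftvec tp V G c \<xi> (merge V a c) = \<xi> a"
  unfolding liftvec_def using merge_facts[OF _ c disj] by simp

lemma liftvec_zero: "restrict m G \<noteq> c \<Longrightarrow> liftvec tp V G c \<xi> m = 0"
  unfolding liftvec_def by simp

lemma liftop_zero: "restrict m' G \<noteq> c \<Longrightarrow> liftop tp V G c K m m' = 0"
  unfolding liftop_def by simp

lemma liftop_zero1: "restrict m G \<noteq> c \<Longrightarrow> liftop tp V G c K m m' = 0"
  unfolding liftop_def by simp

lemma liftop_merge: "a \<in> mems tp V \<Longrightarrow> b \<in> mems tp V \<Longrightarrow> liftop tp V G c K (merge V a c) (merge V b c) = K a b"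
  unfolding liftop_def using merge_facts[OF _ c disj] by simp

lemma liftvec_l2:
  assumes "\<xi> \<in> l2 tp V"
  shows "liftvec tp V G c \<xi> \<in> l2 tp (V \<union> G)"
    "infsum (\<lambda>m. (cmod (liftvec tp V G c \<xi> m))^2) (mems tp (V \<union> G)) = infsum (\<lambda>m. (cmod (\<xi> m))^2) (mems tp V)"
proof -
  let ?f = "\<lambda>m. (cmod (liftvec tp V G c \<xi> m))^2"
  let ?s = "infsum (\<lambda>m. (cmod (\<xi> m))^2) (mems tp V)"
  have h0: "((\<lambda>m. (cmod (\<xi> m))^2) has_sum ?s) (mems tp V)"
    using l2_summable[OF assms] by simp
  have "((\<lambda>a. ?f (merge V a c)) has_sum ?s) (mems tp V)"
    by (rule has_sum_cong[THEN iffD2, OF _ h0]) (simp add: liftvec_merge)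
  then have h: "(?f has_sum ?s) (mems tp (V \<union> G))"
    using has_sum_slice_fixed[where f="?f" and s="?s", OF disj c] liftvec_zero by simp
  have hs: "?f summable_on mems tp (V \<union> G)" using h by (rule has_sum_imp_summable)
  show "liftvec tp V G c \<xi> \<in> l2 tp (V \<union> G)"
    by (rule l2I[OF _ hs]) (simp add: liftvec_def)
  show "infsum ?f (mems tp (V \<union> G)) = ?s" using h by (rule infsumI)
qed

lemma slicev_l2:
  assumes "\<psi> \<in> l2 tp (V \<union> G)" "n \<in> mems tp G"
  shows "slicev tp V n \<psi> \<in> l2 tp V"
    "infsum (\<lambda>m. (cmod (slicev tp V n \<psi> m))^2) (mems tp V) \<le> infsum (\<lambda>m. (cmod (\<psi> m))^2) (mems tp (V \<union> G))"
proof -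
  note sl = summable_slice_nonneg[where f="\<lambda>m. (cmod (\<psi> m))^2", OF l2_summable[OF assms(1)] assms(2)]
  have eq: "(\<lambda>m. (cmod (slicev tp V n \<psi> m))^2) summable_on mems tp V \<longleftrightarrow> (\<lambda>a. (cmod (\<psi> (merge V a n)))^2) summable_on mems tp V"
    by (rule summable_on_cong) (simp add: slicev_def)
  show "slicev tp V n \<psi> \<in> l2 tp V"
    by (rule l2I) (use sl(1) eq in \<open>auto simp: slicev_def\<close>)
  have "infsum (\<lambda>m. (cmod (slicev tp V n \<psi> m))^2) (mems tp V) = infsum (\<lambda>a. (cmod (\<psi> (merge V a n)))^2) (mems tp V)"
    by (rule infsum_cong) (simp add: slicev_def)
  then show "infsum (\<lambda>m. (cmod (slicev tp V n \<psi> m))^2) (mems tp V) \<le> infsum (\<lambda>m. (cmod (\<psi> m))^2) (mems tp (V \<union> G))"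
    using sl(2) by simp
qed

lemma inner_lift:
  "l2inner tp (V \<union> G) \<psi> (liftvec tp V G c \<xi>) = l2inner tp V (slicev tp V c \<psi>) \<xi>"
proof -
  have "l2inner tp (V \<union> G) \<psi> (liftvec tp V G c \<xi>)
      = infsum (\<lambda>a. cnj (\<psi> (merge V a c)) * liftvec tp V G c \<xi> (merge V a c)) (mems tp V)"
    unfolding l2inner_def
    by (rule infsum_slice_fixed[where f="\<lambda>m. cnj (\<psi> m) * liftvec tp V G c \<xi> m", OF disj c, symmetric])
       (simp add: liftvec_zero)
  also have "\<dots> = l2inner tp V (slicev tp V c \<psi>) \<xi>"
    unfolding l2inner_def by (rule infsum_cong) (simp add: slicev_def liftvec_merge)
  finally show ?thesis .
qed

lemma qapply_lift:
  "qapply tp (V \<union> G) (liftop tp V G c K) \<psi> = liftvec tp V G c (qapply tp V K (slicev tp V c \<psi>))"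
proof (rule ext)
  fix m
  show "qapply tp (V \<union> G) (liftop tp V G c K) \<psi> m = liftvec tp V G c (qapply tp V K (slicev tp V c \<psi>)) m"
  proof (cases "m \<in> mems tp (V \<union> G) \<and> restrict m G = c")
    case True
    have mV: "restrict m V \<in> mems tp V" using True restrict_mems by blast
    have "qapply tp (V \<union> G) (liftop tp V G c K) \<psi> m = infsum (\<lambda>m'. liftop tp V G c K m m' * \<psi> m') (mems tp (V \<union> G))"
      unfolding qapply_def using True by simp
    also have "\<dots> = infsum (\<lambda>a. liftop tp V G c K m (merge V a c) * \<psi> (merge V a c)) (mems tp V)"
      by (rule infsum_slice_fixed[where f="\<lambda>m'. liftop tp V G c K m m' * \<psi> m'", OF disj c, symmetric])
         (simp add: liftop_zero)
    also have "\<dots> = infsum (\<lambda>a. K (restrict m V) a * slicev tp V c \<psi> a) (mems tp V)"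
    proof (rule infsum_cong)
      fix a assume a: "a \<in> mems tp V"
      show "liftop tp V G c K m (merge V a c) * \<psi> (merge V a c) = K (restrict m V) a * slicev tp V c \<psi> a"
        unfolding liftop_def slicev_def using True a merge_facts[OF a c disj] by simp
    qed
    also have "\<dots> = liftvec tp V G c (qapply tp V K (slicev tp V c \<psi>)) m"
      unfolding liftvec_def qapply_def using True mV by simp
    finally show ?thesis .
  next
    case False
    then show ?thesis unfolding qapply_def liftvec_def liftop_def by auto
  qed
qed

lemma mixed_lift:
  assumes K: "mixed tp V K"
  shows "mixed tp (V \<union> G) (liftop tp V G c K)"
proof (rule mixedI)
  let ?L = "liftop tp V G c K"
  show "?L m m' = 0" if "m \<notin> mems tp (V \<union> G) \<or> m' \<notin> mems tp (V \<union> G)" for m m'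
    using that unfolding liftop_def by auto
  show "Re (?L m m) \<ge> 0" for m
    unfolding liftop_def using mixed_diag(2)[OF K] by simp
  have "(\<lambda>a. Re (?L (merge V a c) (merge V a c))) summable_on mems tp V"
    using mixed_diag_summable[OF K] by (rule summable_on_cong[THEN iffD1, rotated]) (simp add: liftop_merge)
  then show "(\<lambda>m. Re (?L m m)) summable_on mems tp (V \<union> G)"
    using summable_slice_fixed[where f="\<lambda>m. Re (?L m m)", OF disj c] liftop_zero by simp
  show "cmod (?L a b) \<le> sqrt (Re (?L a a)) * sqrt (Re (?L b b))" for a b
    unfolding liftop_def using mixed_off_sqrt[OF K] by auto
  show "Im (l2inner tp (V \<union> G) \<psi> (qapply tp (V \<union> G) ?L \<psi>)) = 0 \<and> Re (l2inner tp (V \<union> G) \<psi> (qapply tp (V \<union> G) ?L \<psi>)) \<ge> 0"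
    if "\<psi> \<in> l2 tp (V \<union> G)" for \<psi>
  proof -
    have sl: "slicev tp V c \<psi> \<in> l2 tp V" using slicev_l2(1)[OF that c] .
    have "l2inner tp (V \<union> G) \<psi> (qapply tp (V \<union> G) ?L \<psi>) = l2inner tp V (slicev tp V c \<psi>) (qapply tp V K (slicev tp V c \<psi>))"
      unfolding qapply_lift inner_lift ..
    then show ?thesis using mixed_pos[OF K sl] by simp
  qed
qed

end

lemma restrict_restrict': "restrict (restrict m A) B = restrict m (A \<inter> B)"
  by (rule restrict_restrict)

lemma qprod_l2:
  assumes W: "W \<subseteq> V" and \<phi>: "\<phi> \<in> l2 tp W" and \<xi>: "\<xi> \<in> l2 tp (V - W)"
  shows "qprod tp V W \<phi> \<xi> \<in> l2 tp V"
proof (rule l2I)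
  show "qprod tp V W \<phi> \<xi> m = 0" if "m \<notin> mems tp V" for m using that unfolding qprod_def by simp
  have VW: "W \<union> (V - W) = V" using W by blast
  have dj: "W \<inter> (V - W) = {}" by blast
  let ?f = "\<lambda>m. (cmod (qprod tp V W \<phi> \<xi> m))^2"
  have p: "(\<lambda>(a,b). (cmod (\<phi> a))^2 * (cmod (\<xi> b))^2) summable_on mems tp W \<times> mems tp (V - W)"
    by (rule summable_product_nonneg[OF l2_summable[OF \<phi>] l2_summable[OF \<xi>]]) auto
  have "(\<lambda>(a,b). ?f (merge W a b)) summable_on mems tp W \<times> mems tp (V - W)"
  proof (rule summable_on_cong[THEN iffD1, OF _ p])
    fix x assume x: "x \<in> mems tp W \<times> mems tp (V - W)"
    obtain a b where ab: "x = (a,b)" by (cases x)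
    have a: "a \<in> mems tp W" and b: "b \<in> mems tp (V - W)" using x ab by auto
    have mm: "merge W a b \<in> mems tp V" using merge_mems[OF a b] VW by simp
    have r1: "restrict (merge W a b) W = a" by (rule restrict_merge1[OF a])
    have r2: "restrict (merge W a b) (V - W) = b" by (rule restrict_merge2[OF b dj])
    show "(case x of (a, b) \<Rightarrow> (cmod (\<phi> a))\<^sup>2 * (cmod (\<xi> b))\<^sup>2) = (case x of (a, b) \<Rightarrow> ?f (merge W a b))"
      unfolding ab qprod_def using mm r1 r2 by (simp add: norm_mult power_mult_distrib)
  qed
  then have "?f summable_on mems tp (W \<union> (V - W))"
    using summable_mems_Un[where f="?f", OF dj] by blast
  then show "?f summable_on mems tp V" using VW by simp
qed

lemma range_in_supp:
  assumes K: "mixed tp V K" and \<phi>: "\<phi> \<in> l2 tp V"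
  shows "qapply tp V K \<phi> \<in> supp tp V K"
proof -
  obtain C where C: "\<forall>\<psi>\<in>l2 tp V. qapply tp V K \<psi> \<in> l2 tp V \<and> l2norm tp V (qapply tp V K \<psi>) \<le> C * l2norm tp V \<psi>"
    using mixed_bounded[OF K] by blast
  have "qapply tp V K \<phi> \<in> l2 tp V" using C \<phi> by blast
  moreover have "\<exists>\<phi>'\<in>l2 tp V. l2norm tp V (\<lambda>m. qapply tp V K \<phi> m - qapply tp V K \<phi>' m) < e" if "e > 0" for e
  proof (intro bexI[of _ \<phi>] \<phi>)
    have "l2norm tp V (\<lambda>m. qapply tp V K \<phi> m - qapply tp V K \<phi> m) = 0" unfolding l2norm_def by simp
    then show "l2norm tp V (\<lambda>m. qapply tp V K \<phi> m - qapply tp V K \<phi> m) < e" using that by simp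
  qed
  ultimately show ?thesis unfolding supp_def by blast
qed

lemma supp_sub:
  assumes A: "cclosed tp V A" and R: "\<And>\<phi>. \<phi> \<in> l2 tp V \<Longrightarrow> qapply tp V K \<phi> \<in> A"
  shows "supp tp V K \<subseteq> A"
proof
  fix \<psi> assume "\<psi> \<in> supp tp V K"
  then have \<psi>: "\<psi> \<in> l2 tp V" and ap: "\<And>e. e > 0 \<Longrightarrow> \<exists>\<phi>\<in>l2 tp V. l2norm tp V (\<lambda>m. \<psi> m - qapply tp V K \<phi> m) < e"
    unfolding supp_def by blast+
  show "\<psi> \<in> A"
  proof (rule cclosedD(4)[OF A \<psi>])
    fix e :: real assume "e > 0"
    then obtain \<phi> where "\<phi> \<in> l2 tp V" "l2norm tp V (\<lambda>m. \<psi> m - qapply tp V K \<phi> m) < e" using ap by blast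
    then show "\<exists>\<phi>\<in>A. l2norm tp V (\<lambda>m. \<psi> m - \<phi> m) < e" using R by blast
  qed
qed

context
  fixes tp :: "'v \<Rightarrow> 'val set" and V G W :: "'v set" and S :: "('v,'val) qvec set"
  assumes disj: "V \<inter> G = {}" and WV: "W \<subseteq> V" and S: "S \<subseteq> l2 tp W"
begin

lemma VGW: "(V \<union> G) - W = (V - W) \<union> G" using disj WV by blast

lemma lift_qin:
  assumes c: "c \<in> mems tp G" and \<xi>: "\<xi> \<in> qin tp V W S"
  shows "liftvec tp V G c \<xi> \<in> qin tp (V \<union> G) W S"
proof -
  define T where "T = {\<zeta> \<in> l2 tp V. liftvec tp V G c \<zeta> \<in> qin tp (V \<union> G) W S}"
  note Q = qin_cclosed[of tp "V \<union> G" W S]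
  have "csubspace tp V T"
  proof (rule csubspaceI)
    show "T \<subseteq> l2 tp V" unfolding T_def by blast
    have "liftvec tp V G c (\<lambda>_. 0) = (\<lambda>_. 0)" unfolding liftvec_def by auto
    then show "(\<lambda>_. 0) \<in> T" unfolding T_def using cclosedD(1)[OF Q] l2_zero_vec by simp
    show "(\<lambda>m. \<phi> m + \<psi> m) \<in> T" if "\<phi> \<in> T" "\<psi> \<in> T" for \<phi> \<psi>
    proof -
      have "liftvec tp V G c (\<lambda>m. \<phi> m + \<psi> m) = (\<lambda>m. liftvec tp V G c \<phi> m + liftvec tp V G c \<psi> m)"
        unfolding liftvec_def by auto
      then show ?thesis using that cclosedD(2)[OF Q] l2_add unfolding T_def by auto
    qed
    show "(\<lambda>m. a * \<phi> m) \<in> T" if "\<phi> \<in> T" for a \<phi>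
    proof -
      have "liftvec tp V G c (\<lambda>m. a * \<phi> m) = (\<lambda>m. a * liftvec tp V G c \<phi> m)"
        unfolding liftvec_def by auto
      then show ?thesis using that cclosedD(3)[OF Q] l2_scale unfolding T_def by auto
    qed
    show "\<psi> \<in> T" if \<psi>: "\<psi> \<in> l2 tp V" and ap: "\<And>e. e > 0 \<Longrightarrow> \<exists>\<phi>\<in>T. l2norm tp V (\<lambda>m. \<psi> m - \<phi> m) < e" for \<psi>
    proof -
      have "liftvec tp V G c \<psi> \<in> qin tp (V \<union> G) W S"
      proof (rule cclosedD(4)[OF Q liftvec_l2(1)[OF disj c \<psi>]])
        fix e :: real assume "e > 0"
        then obtain \<phi> where \<phi>: "\<phi> \<in> T" and n: "l2norm tp V (\<lambda>m. \<psi> m - \<phi> m) < e" using ap by blast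
        have \<phi>l: "\<phi> \<in> l2 tp V" using \<phi> unfolding T_def by blast
        have d: "(\<lambda>m. \<psi> m - \<phi> m) \<in> l2 tp V" using l2_diff[OF \<psi> \<phi>l] .
        have eq: "(\<lambda>m. liftvec tp V G c \<psi> m - liftvec tp V G c \<phi> m) = liftvec tp V G c (\<lambda>m. \<psi> m - \<phi> m)"
          unfolding liftvec_def by auto
        have "l2norm tp (V \<union> G) (\<lambda>m. liftvec tp V G c \<psi> m - liftvec tp V G c \<phi> m) = l2norm tp V (\<lambda>m. \<psi> m - \<phi> m)"
          unfolding eq l2norm_def liftvec_l2(2)[OF disj c d] ..
        moreover have "liftvec tp V G c \<phi> \<in> qin tp (V \<union> G) W S" using \<phi> unfolding T_def by blast
        ultimately show "\<exists>\<phi>'\<in>qin tp (V \<union> G) W S. l2norm tp (V \<union> G) (\<lambda>m. liftvec tp V G c \<psi> m - \<phi>' m) < e"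
          using n by (intro bexI[of _ "liftvec tp V G c \<phi>"]) auto
      qed
      then show ?thesis unfolding T_def using \<psi> by blast
    qed
  qed
  moreover have "qprod tp V W \<phi> \<eta> \<in> T" if \<phi>: "\<phi> \<in> S" and \<eta>: "\<eta> \<in> l2 tp (V - W)" for \<phi> \<eta>
  proof -
    have dj2: "(V - W) \<inter> G = {}" using disj by blast
    let ?\<eta>' = "liftvec tp (V - W) G c \<eta>"
    have \<eta>': "?\<eta>' \<in> l2 tp ((V \<union> G) - W)" unfolding VGW by (rule liftvec_l2(1)[OF dj2 c \<eta>])
    have eq: "liftvec tp V G c (qprod tp V W \<phi> \<eta>) = qprod tp (V \<union> G) W \<phi> ?\<eta>'"
    proof (rule ext)
      fix m
      show "liftvec tp V G c (qprod tp V W \<phi> \<eta>) m = qprod tp (V \<union> G) W \<phi> ?\<eta>' m"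
      proof (cases "m \<in> mems tp (V \<union> G)")
        case True
        have mV: "restrict m V \<in> mems tp V" using True restrict_mems by blast
        have m2: "restrict m ((V \<union> G) - W) \<in> mems tp ((V - W) \<union> G)" using True restrict_mems[of m tp "V \<union> G" "(V \<union> G) - W"] VGW by auto
        have i1: "(V \<union> G - W) \<inter> G = G" "(V \<union> G - W) \<inter> (V - W) = V - W" "V \<inter> W = W" "V \<inter> (V - W) = V - W"
          using disj WV by auto
        show ?thesis unfolding liftvec_def qprod_def using True mV m2 by (simp add: restrict_restrict' i1)
      next
        case False
        then show ?thesis unfolding liftvec_def qprod_def by simp
      qed
    qed
    have "qprod tp V W \<phi> \<eta> \<in> l2 tp V" using qprod_l2[OF WV _ \<eta>] \<phi> S by blast
    moreover have "qprod tp (V \<union> G) W \<phi> ?\<eta>' \<in> qin tp (V \<union> G) W S" by (rule qin_prod[OF \<phi> \<eta>'])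
    ultimately show ?thesis unfolding T_def using eq by simp
  qed
  ultimately have "qin tp V W S \<subseteq> T" by (rule qin_least)
  then show ?thesis using \<xi> unfolding T_def by blast
qed

lemma slice_qin:
  assumes n: "n \<in> mems tp G" and \<zeta>: "\<zeta> \<in> qin tp (V \<union> G) W S"
  shows "slicev tp V n \<zeta> \<in> qin tp V W S"
proof -
  define T where "T = {\<psi> \<in> l2 tp (V \<union> G). slicev tp V n \<psi> \<in> qin tp V W S}"
  note Q = qin_cclosed[of tp V W S]
  have "csubspace tp (V \<union> G) T"
  proof (rule csubspaceI)
    show "T \<subseteq> l2 tp (V \<union> G)" unfolding T_def by blast
    have "slicev tp V n (\<lambda>_. 0) = (\<lambda>_. 0)" unfolding slicev_def by auto
    then show "(\<lambda>_. 0) \<in> T" unfolding T_def using cclosedD(1)[OF Q] l2_zero_vec by simp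
    show "(\<lambda>m. \<phi> m + \<psi> m) \<in> T" if "\<phi> \<in> T" "\<psi> \<in> T" for \<phi> \<psi>
    proof -
      have "slicev tp V n (\<lambda>m. \<phi> m + \<psi> m) = (\<lambda>m. slicev tp V n \<phi> m + slicev tp V n \<psi> m)"
        unfolding slicev_def by auto
      then show ?thesis using that cclosedD(2)[OF Q] l2_add unfolding T_def by auto
    qed
    show "(\<lambda>m. a * \<phi> m) \<in> T" if "\<phi> \<in> T" for a \<phi>
    proof -
      have "slicev tp V n (\<lambda>m. a * \<phi> m) = (\<lambda>m. a * slicev tp V n \<phi> m)"
        unfolding slicev_def by auto
      then show ?thesis using that cclosedD(3)[OF Q] l2_scale unfolding T_def by auto
    qed
    show "\<psi> \<in> T" if \<psi>: "\<psi> \<in> l2 tp (V \<union> G)" and ap: "\<And>e. e > 0 \<Longrightarrow> \<exists>\<phi>\<in>T. l2norm tp (V \<union> G) (\<lambda>m. \<psi> m - \<phi> m) < e" for \<psi>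
    proof -
      have "slicev tp V n \<psi> \<in> qin tp V W S"
      proof (rule cclosedD(4)[OF Q slicev_l2(1)[OF disj n \<psi> n]])
        fix e :: real assume "e > 0"
        then obtain \<phi> where \<phi>: "\<phi> \<in> T" and ne: "l2norm tp (V \<union> G) (\<lambda>m. \<psi> m - \<phi> m) < e" using ap by blast
        have \<phi>l: "\<phi> \<in> l2 tp (V \<union> G)" using \<phi> unfolding T_def by blast
        have d: "(\<lambda>m. \<psi> m - \<phi> m) \<in> l2 tp (V \<union> G)" using l2_diff[OF \<psi> \<phi>l] .
        have eq: "(\<lambda>m. slicev tp V n \<psi> m - slicev tp V n \<phi> m) = slicev tp V n (\<lambda>m. \<psi> m - \<phi> m)"
          unfolding slicev_def by auto
        have "l2norm tp V (\<lambda>m. slicev tp V n \<psi> m - slicev tp V n \<phi> m) \<le> l2norm tp (V \<union> G) (\<lambda>m. \<psi> m - \<phi> m)"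
          unfolding eq l2norm_def using slicev_l2(2)[OF disj n d n] by simp
        moreover have "slicev tp V n \<phi> \<in> qin tp V W S" using \<phi> unfolding T_def by blast
        ultimately show "\<exists>\<phi>'\<in>qin tp V W S. l2norm tp V (\<lambda>m. slicev tp V n \<psi> m - \<phi>' m) < e"
          using ne by (intro bexI[of _ "slicev tp V n \<phi>"]) auto
      qed
      then show ?thesis unfolding T_def using \<psi> by blast
    qed
  qed
  moreover have "qprod tp (V \<union> G) W \<phi> \<eta> \<in> T" if \<phi>: "\<phi> \<in> S" and \<eta>: "\<eta> \<in> l2 tp ((V \<union> G) - W)" for \<phi> \<eta>
  proof -
    have dj2: "(V - W) \<inter> G = {}" using disj by blast
    let ?\<eta>' = "slicev tp (V - W) n \<eta>"
    have \<eta>0: "\<eta> \<in> l2 tp ((V - W) \<union> G)" using \<eta> VGW by simp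
    have \<eta>': "?\<eta>' \<in> l2 tp (V - W)" by (rule slicev_l2(1)[OF dj2 n \<eta>0 n])
    have eq: "slicev tp V n (qprod tp (V \<union> G) W \<phi> \<eta>) = qprod tp V W \<phi> ?\<eta>'"
    proof (rule ext)
      fix a
      show "slicev tp V n (qprod tp (V \<union> G) W \<phi> \<eta>) a = qprod tp V W \<phi> ?\<eta>' a"
      proof (cases "a \<in> mems tp V")
        case True
        have mm: "merge V a n \<in> mems tp (V \<union> G)" by (rule merge_mems[OF True n])
        have aW: "restrict a (V - W) \<in> mems tp (V - W)" using True restrict_mems by blast
        have r1: "restrict (merge V a n) W = restrict a W"
          using WV unfolding restrict_def merge_def by (auto intro!: ext)
        have r2: "restrict (merge V a n) ((V \<union> G) - W) = merge (V - W) (restrict a (V - W)) n"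
        proof (rule ext)
          fix v
          show "restrict (merge V a n) ((V \<union> G) - W) v = merge (V - W) (restrict a (V - W)) n v"
          proof (cases "v \<in> G")
            case False
            then have "n v = undefined" using n unfolding mems_iff by blast
            then show ?thesis using False unfolding restrict_def merge_def by auto
          next
            case True
            then have "v \<notin> V" "v \<notin> W" using disj WV by auto
            then show ?thesis using True unfolding restrict_def merge_def by auto
          qed
        qed
        show ?thesis unfolding slicev_def qprod_def using True mm aW r1 r2 by simp
      next
        case False
        then show ?thesis unfolding slicev_def qprod_def by simp
      qed
    qed
    have "qprod tp (V \<union> G) W \<phi> \<eta> \<in> l2 tp (V \<union> G)" using qprod_l2[OF _ _ \<eta>] \<phi> S WV by blast
    moreover have "qprod tp V W \<phi> ?\<eta>' \<in> qin tp V W S" by (rule qin_prod[OF \<phi> \<eta>'])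
    ultimately show ?thesis unfolding T_def using eq by simp
  qed
  ultimately have "qin tp (V \<union> G) W S \<subseteq> T" by (rule qin_least)
  then show ?thesis using \<zeta> unfolding T_def by blast
qed

end

lemma supp_lift:
  assumes disj: "V \<inter> G = {}" and WV: "W \<subseteq> V" and S: "S \<subseteq> l2 tp W" and c: "c \<in> mems tp G"
    and K: "mixed tp V K" and sK: "supp tp V K \<subseteq> qin tp V W S"
  shows "supp tp (V \<union> G) (liftop tp V G c K) \<subseteq> qin tp (V \<union> G) W S"
proof (rule supp_sub[OF qin_cclosed])
  fix \<phi> assume \<phi>: "\<phi> \<in> l2 tp (V \<union> G)"
  have sl: "slicev tp V c \<phi> \<in> l2 tp V" by (rule slicev_l2(1)[OF disj c \<phi> c])
  have "qapply tp V K (slicev tp V c \<phi>) \<in> qin tp V W S" using range_in_supp[OF K sl] sK by blast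
  then have "liftvec tp V G c (qapply tp V K (slicev tp V c \<phi>)) \<in> qin tp (V \<union> G) W S"
    by (rule lift_qin[OF disj WV S c])
  then show "qapply tp (V \<union> G) (liftop tp V G c K) \<phi> \<in> qin tp (V \<union> G) W S"
    unfolding qapply_lift[OF disj c] .
qed

lemma merge_assoc: "merge X m (merge R r c) = merge (X \<union> R) (merge X m r) c"
  unfolding merge_def by (rule ext) auto

lemma restrict_merge_disj: "X \<inter> G = {} \<Longrightarrow> restrict (merge X m n) G = restrict n G"
  unfolding merge_def restrict_def by (rule ext) auto

lemma ptrace_lift:
  assumes XR: "X \<inter> R = {}" and G: "(X \<union> R) \<inter> G = {}" and c: "c \<in> mems tp G"
  shows "ptrace tp X (R \<union> G) (liftop tp (X \<union> R) G c K) = ptrace tp X R K"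
proof (intro ext)
  fix m m'
  show "ptrace tp X (R \<union> G) (liftop tp (X \<union> R) G c K) m m' = ptrace tp X R K m m'"
  proof (cases "m \<in> mems tp X \<and> m' \<in> mems tp X")
    case True
    have RG: "R \<inter> G = {}" using G by blast
    have XG: "X \<inter> G = {}" using G by blast
    let ?f = "\<lambda>n. liftop tp (X \<union> R) G c K (merge X m n) (merge X m' n)"
    have "infsum ?f (mems tp (R \<union> G)) = infsum (\<lambda>r. ?f (merge R r c)) (mems tp R)"
    proof (rule infsum_slice_fixed[where f="?f", OF RG c, symmetric])
      fix n assume n: "n \<in> mems tp (R \<union> G)" "restrict n G \<noteq> c"
      have "restrict (merge X m n) G = restrict n G" by (rule restrict_merge_disj[OF XG])
      then have "restrict (merge X m n) G \<noteq> c" using n(2) by simp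
      then show "?f n = 0" unfolding liftop_def by simp
    qed
    also have "\<dots> = infsum (\<lambda>r. K (merge X m r) (merge X m' r)) (mems tp R)"
    proof (rule infsum_cong)
      fix r assume r: "r \<in> mems tp R"
      have a: "merge X m r \<in> mems tp (X \<union> R)" "merge X m' r \<in> mems tp (X \<union> R)"
        using merge_mems[OF _ r] True by auto
      show "?f (merge R r c) = K (merge X m r) (merge X m' r)"
        unfolding merge_assoc using liftop_merge[OF G c a] .
    qed
    finally show ?thesis unfolding ptrace_def using True by simp
  next
    case False
    then show ?thesis unfolding ptrace_def by auto
  qed
qed

lemma qtensor_swap: "qtensor tp A B K K' = qtensor tp B A K' K"
  unfolding qtensor_def by (intro ext) (simp add: Un_commute mult.commute)

lemma separable_swap: "separable tp A B K \<Longrightarrow> separable tp B A K"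
  unfolding separable_def qtensor_swap[of tp A B] by blast

lemma separable_lift:
  assumes sep: "separable tp A B K" and AB: "A \<inter> B = {}" and G: "(A \<union> B) \<inter> G = {}" and c: "c \<in> mems tp G"
  shows "separable tp (A \<union> G) B (liftop tp (A \<union> B) G c K)"
proof -
  obtain \<rho>s \<rho>s' where m: "\<forall>i. mixed tp A (\<rho>s i) \<and> mixed tp B (\<rho>s' i)"
    and s: "\<forall>m m'. (\<lambda>i. qtensor tp A B (\<rho>s i) (\<rho>s' i) m m') sums K m m'"
    using sep unfolding separable_def by blast
  have AG: "A \<inter> G = {}" using G by blast
  define \<sigma>s where "\<sigma>s = (\<lambda>i. liftop tp A G c (\<rho>s i))"
  have m': "mixed tp (A \<union> G) (\<sigma>s i)" for i unfolding \<sigma>s_def using mixed_lift[OF AG c] m by blast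
  have eq: "qtensor tp (A \<union> G) B (\<sigma>s i) (\<rho>s' i) x y
     = (if x \<in> mems tp (A \<union> B \<union> G) \<and> y \<in> mems tp (A \<union> B \<union> G) \<and> restrict x G = c \<and> restrict y G = c
        then qtensor tp A B (\<rho>s i) (\<rho>s' i) (restrict x (A \<union> B)) (restrict y (A \<union> B)) else 0)" for i x y
  proof -
    have se: "A \<union> G \<union> B = A \<union> B \<union> G" by blast
    have i1: "(A \<union> G) \<inter> G = G" "(A \<union> G) \<inter> A = A" "(A \<union> B) \<inter> A = A" "(A \<union> B) \<inter> B = B" by auto
    show ?thesis
    proof (cases "x \<in> mems tp (A \<union> B \<union> G) \<and> y \<in> mems tp (A \<union> B \<union> G)")
      case True
      have r: "restrict x (A \<union> G) \<in> mems tp (A \<union> G)" "restrict y (A \<union> G) \<in> mems tp (A \<union> G)"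
        "restrict x (A \<union> B) \<in> mems tp (A \<union> B)" "restrict y (A \<union> B) \<in> mems tp (A \<union> B)"
        using True restrict_mems by (blast, blast, blast, blast)
      show ?thesis using True r unfolding qtensor_def \<sigma>s_def liftop_def se
        by (simp add: restrict_restrict' i1)
    next
      case False
      then show ?thesis unfolding qtensor_def se by auto
    qed
  qed
  have "(\<lambda>i. qtensor tp (A \<union> G) B (\<sigma>s i) (\<rho>s' i) x y) sums liftop tp (A \<union> B) G c K x y" for x y
    unfolding eq liftop_def using s by auto
  then show ?thesis unfolding separable_def using m' m by blast
qed

lemma sat_addE:
  assumes ne: "\<forall>v. tp v \<noteq> {}"
    and d1: "X \<inter> E = {}" "X \<inter> U = {}" "E \<inter> U = {}" and dG: "(X \<union> E \<union> U) \<inter> G = {}"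
    and WV: "W \<subseteq> X \<union> E \<union> U" and S: "S \<subseteq> l2 tp W"
    and sat: "satisfies tp X E U (qin tp (X \<union> E \<union> U) W S) \<rho>"
  shows "satisfies tp X (E \<union> G) U (qin tp (X \<union> (E \<union> G) \<union> U) W S) \<rho>"
proof -
  obtain \<rho>o where K: "mixed tp (X \<union> E \<union> U) \<rho>o" and sep: "separable tp (X \<union> E) U \<rho>o"
    and sK: "supp tp (X \<union> E \<union> U) \<rho>o \<subseteq> qin tp (X \<union> E \<union> U) W S" and pt: "ptrace tp X (E \<union> U) \<rho>o = \<rho>"
    using sat unfolding satisfies_def by blast
  obtain c where c: "c \<in> mems tp G" using mems_nonempty[OF ne] by blast
  define \<rho>o' where "\<rho>o' = liftop tp (X \<union> E \<union> U) G c \<rho>o"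
  have e1: "X \<union> (E \<union> G) \<union> U = (X \<union> E \<union> U) \<union> G" by blast
  have e2: "X \<union> (E \<union> G) = (X \<union> E) \<union> G" by blast
  have e3: "E \<union> G \<union> U = (E \<union> U) \<union> G" by blast
  have e4: "X \<union> E \<union> U = X \<union> (E \<union> U)" by blast
  have "mixed tp (X \<union> (E \<union> G) \<union> U) \<rho>o'" unfolding e1 \<rho>o'_def by (rule mixed_lift[OF dG c K])
  moreover have "separable tp (X \<union> (E \<union> G)) U \<rho>o'"
    unfolding e2 \<rho>o'_def by (rule separable_lift[OF sep _ dG c]) (use d1 in blast)
  moreover have "supp tp (X \<union> (E \<union> G) \<union> U) \<rho>o' \<subseteq> qin tp (X \<union> (E \<union> G) \<union> U) W S"
    unfolding e1 \<rho>o'_def by (rule supp_lift[OF dG WV S c K sK])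
  moreover have "ptrace tp X (E \<union> G \<union> U) \<rho>o' = \<rho>"
  proof -
    have "ptrace tp X ((E \<union> U) \<union> G) (liftop tp (X \<union> (E \<union> U)) G c \<rho>o) = ptrace tp X (E \<union> U) \<rho>o"
      by (rule ptrace_lift[OF _ _ c]) (use d1 dG in blast)+
    then show ?thesis unfolding e3 \<rho>o'_def e4 pt .
  qed
  ultimately show ?thesis unfolding satisfies_def by blast
qed

lemma sat_addU:
  assumes ne: "\<forall>v. tp v \<noteq> {}"
    and d1: "X \<inter> E = {}" "X \<inter> U = {}" "E \<inter> U = {}" and dG: "(X \<union> E \<union> U) \<inter> G = {}"
    and WV: "W \<subseteq> X \<union> E \<union> U" and S: "S \<subseteq> l2 tp W"
    and sat: "satisfies tp X E U (qin tp (X \<union> E \<union> U) W S) \<rho>"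
  shows "satisfies tp X E (U \<union> G) (qin tp (X \<union> E \<union> (U \<union> G)) W S) \<rho>"
proof -
  obtain \<rho>o where K: "mixed tp (X \<union> E \<union> U) \<rho>o" and sep: "separable tp (X \<union> E) U \<rho>o"
    and sK: "supp tp (X \<union> E \<union> U) \<rho>o \<subseteq> qin tp (X \<union> E \<union> U) W S" and pt: "ptrace tp X (E \<union> U) \<rho>o = \<rho>"
    using sat unfolding satisfies_def by blast
  obtain c where c: "c \<in> mems tp G" using mems_nonempty[OF ne] by blast
  define \<rho>o' where "\<rho>o' = liftop tp (X \<union> E \<union> U) G c \<rho>o"
  have e1: "X \<union> E \<union> (U \<union> G) = (X \<union> E \<union> U) \<union> G" by blast
  have e3: "E \<union> (U \<union> G) = (E \<union> U) \<union> G" by blast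
  have e4: "X \<union> E \<union> U = X \<union> (E \<union> U)" by blast
  have e5: "U \<union> (X \<union> E) = X \<union> E \<union> U" by blast
  have "mixed tp (X \<union> E \<union> (U \<union> G)) \<rho>o'" unfolding e1 \<rho>o'_def by (rule mixed_lift[OF dG c K])
  moreover have "separable tp (X \<union> E) (U \<union> G) \<rho>o'"
  proof -
    have "separable tp (U \<union> G) (X \<union> E) (liftop tp (U \<union> (X \<union> E)) G c \<rho>o)"
      by (rule separable_lift[OF separable_swap[OF sep] _ _ c]) (use d1 dG in blast)+
    then show ?thesis unfolding e5 \<rho>o'_def by (rule separable_swap)
  qed
  moreover have "supp tp (X \<union> E \<union> (U \<union> G)) \<rho>o' \<subseteq> qin tp (X \<union> E \<union> (U \<union> G)) W S"
    unfolding e1 \<rho>o'_def by (rule supp_lift[OF dG WV S c K sK])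
  moreover have "ptrace tp X (E \<union> (U \<union> G)) \<rho>o' = \<rho>"
  proof -
    have "ptrace tp X ((E \<union> U) \<union> G) (liftop tp (X \<union> (E \<union> U)) G c \<rho>o) = ptrace tp X (E \<union> U) \<rho>o"
      by (rule ptrace_lift[OF _ _ c]) (use d1 dG in blast)+
    then show ?thesis unfolding e3 \<rho>o'_def e4 pt .
  qed
  ultimately show ?thesis unfolding satisfies_def by blast
qed

lemma summable_norm_complex:
  fixes f :: "_ \<Rightarrow> complex"
  assumes "g summable_on A" "\<And>x. x \<in> A \<Longrightarrow> cmod (f x) \<le> g x"
  shows "f summable_on A" "(\<lambda>x. cmod (f x)) summable_on A"
proof -
  show n: "(\<lambda>x. cmod (f x)) summable_on A"
    by (rule summable_on_comparison_test[OF assms(1)]) (use assms(2) in auto)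
  then show "f summable_on A" using summable_on_iff_abs_summable_on_complex by blast
qed

context
  fixes tp :: "'v \<Rightarrow> 'val set" and V G :: "'v set" and K :: "('v,'val) qop"
  assumes disj: "V \<inter> G = {}" and K: "mixed tp (V \<union> G) K"
begin

definition "dd x = Re (K x x)"
definition "DD m = infsum (\<lambda>n. dd (merge V m n)) (mems tp G)"

lemma dd0: "dd x \<ge> 0" unfolding dd_def using mixed_diag(2)[OF K] .

lemma dd_summable: "dd summable_on mems tp (V \<union> G)"
  unfolding dd_def using mixed_diag_summable[OF K] .

lemma dd_slice_summable: "m \<in> mems tp V \<Longrightarrow> (\<lambda>n. dd (merge V m n)) summable_on mems tp G"
  by (rule summable_mems_Un_slice[OF disj dd_summable])

lemma DD0: "DD m \<ge> 0" unfolding DD_def using dd0 by (simp add: infsum_nonneg)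

lemma DD_summable: "DD summable_on mems tp V"
  unfolding DD_def by (rule summable_mems_Un_iter[OF disj dd_summable])

lemma DD_sum: "infsum DD (mems tp V) = infsum dd (mems tp (V \<union> G))"
  unfolding DD_def by (rule infsum_mems_Un_iter[OF disj dd_summable])

lemma entry_summable:
  assumes "m \<in> mems tp V" "m' \<in> mems tp V"
  shows "(\<lambda>n. K (merge V m n) (merge V m' n)) summable_on mems tp G"
    "(\<lambda>n. cmod (K (merge V m n) (merge V m' n))) summable_on mems tp G"
proof -
  have s0: "(\<lambda>n. dd (merge V m n) + dd (merge V m' n)) summable_on mems tp G"
    using summable_on_add[OF dd_slice_summable[OF assms(1)] dd_slice_summable[OF assms(2)]] .
  have s: "(\<lambda>n. (dd (merge V m n) + dd (merge V m' n)) / 2) summable_on mems tp G"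
    using summable_on_cmult_left[OF s0, of "1/2"] by simp
  have b: "cmod (K (merge V m n) (merge V m' n)) \<le> (dd (merge V m n) + dd (merge V m' n)) / 2" for n
    unfolding dd_def by (rule mixed_off_avg[OF K])
  show "(\<lambda>n. K (merge V m n) (merge V m' n)) summable_on mems tp G"
    "(\<lambda>n. cmod (K (merge V m n) (merge V m' n))) summable_on mems tp G"
    using summable_norm_complex[OF s b] by auto
qed

lemma ptrace_bound:
  "cmod (ptrace tp V G K m m') \<le> sqrt (DD m) * sqrt (DD m')"
proof (cases "m \<in> mems tp V \<and> m' \<in> mems tp V")
  case True
  then have m: "m \<in> mems tp V" and m': "m' \<in> mems tp V" by auto
  let ?f = "\<lambda>n. sqrt (dd (merge V m n))" and ?g = "\<lambda>n. sqrt (dd (merge V m' n))"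
  have f2: "(\<lambda>n. (?f n)^2) summable_on mems tp G" using dd_slice_summable[OF m] dd0 by simp
  have g2: "(\<lambda>n. (?g n)^2) summable_on mems tp G" using dd_slice_summable[OF m'] dd0 by simp
  have "cmod (ptrace tp V G K m m') = cmod (infsum (\<lambda>n. K (merge V m n) (merge V m' n)) (mems tp G))"
    unfolding ptrace_def using True by simp
  also have "\<dots> \<le> infsum (\<lambda>n. cmod (K (merge V m n) (merge V m' n))) (mems tp G)"
    by (rule norm_infsum_bound) (use entry_summable(2)[OF m m'] in simp)
  also have "\<dots> \<le> infsum (\<lambda>n. ?f n * ?g n) (mems tp G)"
    by (rule infsum_mono[OF entry_summable(2)[OF m m'] CS_real(1)[OF f2 g2]])
       (auto simp: dd_def mixed_diag(2)[OF K] intro: mixed_off_sqrt[OF K])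
  also have "\<dots> \<le> sqrt (infsum (\<lambda>n. (?f n)^2) (mems tp G)) * sqrt (infsum (\<lambda>n. (?g n)^2) (mems tp G))"
    by (rule CS_real(2)[OF f2 g2]) (auto simp: dd0)
  also have "\<dots> = sqrt (DD m) * sqrt (DD m')" unfolding DD_def using dd0 by simp
  finally show ?thesis .
next
  case False
  then show ?thesis unfolding ptrace_def using DD0 by auto
qed

lemma ptrace_diag: "m \<in> mems tp V \<Longrightarrow> Re (ptrace tp V G K m m) = DD m"
  unfolding ptrace_def DD_def dd_def using infsum_Re[OF entry_summable(1)] by simp

lemma ptrace_diag_out: "m \<notin> mems tp V \<Longrightarrow> ptrace tp V G K m m' = 0"
  unfolding ptrace_def by simp

lemma inner_lift_K:
  assumes n: "n \<in> mems tp G"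
  shows "l2inner tp (V \<union> G) (liftvec tp V G n \<psi>) (qapply tp (V \<union> G) K (liftvec tp V G n \<psi>))
    = infsum (\<lambda>a. infsum (\<lambda>a'. cnj (\<psi> a) * K (merge V a n) (merge V a' n) * \<psi> a') (mems tp V)) (mems tp V)"
proof -
  let ?L = "liftvec tp V G n \<psi>"
  have "l2inner tp (V \<union> G) ?L (qapply tp (V \<union> G) K ?L)
      = infsum (\<lambda>a. cnj (?L (merge V a n)) * qapply tp (V \<union> G) K ?L (merge V a n)) (mems tp V)"
    unfolding l2inner_def
    by (rule infsum_slice_fixed[where f="\<lambda>x. cnj (?L x) * qapply tp (V \<union> G) K ?L x", OF disj n, symmetric])
       (simp add: liftvec_zero[OF disj n])
  also have "\<dots> = infsum (\<lambda>a. infsum (\<lambda>a'. cnj (\<psi> a) * K (merge V a n) (merge V a' n) * \<psi> a') (mems tp V)) (mems tp V)"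
  proof (rule infsum_cong)
    fix a assume a: "a \<in> mems tp V"
    have mm: "merge V a n \<in> mems tp (V \<union> G)" by (rule merge_mems[OF a n])
    have "qapply tp (V \<union> G) K ?L (merge V a n) = infsum (\<lambda>x. K (merge V a n) x * ?L x) (mems tp (V \<union> G))"
      unfolding qapply_def using mm by simp
    also have "\<dots> = infsum (\<lambda>a'. K (merge V a n) (merge V a' n) * ?L (merge V a' n)) (mems tp V)"
      by (rule infsum_slice_fixed[where f="\<lambda>x. K (merge V a n) x * ?L x", OF disj n, symmetric])
         (simp add: liftvec_zero[OF disj n])
    also have "\<dots> = infsum (\<lambda>a'. K (merge V a n) (merge V a' n) * \<psi> a') (mems tp V)"
      by (rule infsum_cong) (simp add: liftvec_merge[OF disj n])
    finally have q: "qapply tp (V \<union> G) K ?L (merge V a n) = infsum (\<lambda>a'. K (merge V a n) (merge V a' n) * \<psi> a') (mems tp V)" .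
    show "cnj (?L (merge V a n)) * qapply tp (V \<union> G) K ?L (merge V a n)
        = infsum (\<lambda>a'. cnj (\<psi> a) * K (merge V a n) (merge V a' n) * \<psi> a') (mems tp V)"
      unfolding q liftvec_merge[OF disj n a] infsum_cmult_right'[symmetric] by (simp add: mult.assoc)
  qed
  finally show ?thesis .
qed

lemma ptrace_pos:
  assumes \<psi>: "\<psi> \<in> l2 tp V"
  shows "Im (l2inner tp V \<psi> (qapply tp V (ptrace tp V G K) \<psi>)) = 0 \<and> Re (l2inner tp V \<psi> (qapply tp V (ptrace tp V G K) \<psi>)) \<ge> 0"
proof -
  define \<Phi> where "\<Phi> = (\<lambda>(m,(m',n)). cnj (\<psi> m) * K (merge V m n) (merge V m' n) * \<psi> m')"
  define N where "N = (\<lambda>m. (cmod (\<psi> m))^2)"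
  define B1 where "B1 = (\<lambda>(m::('v,'val) mem,(m',n)). N m * dd (merge V m' n))"
  define B2 where "B2 = (\<lambda>(m::('v,'val) mem,(m',n)). N m' * dd (merge V m n))"
  let ?D = "mems tp V \<times> (mems tp V \<times> mems tp G)"
  have hs: "(\<lambda>(m',n). dd (merge V m' n)) summable_on mems tp V \<times> mems tp G"
    using summable_mems_Un[where f=dd, OF disj] dd_summable by blast
  have t1: "(\<lambda>(x,y). N x * (\<lambda>(m',n). dd (merge V m' n)) y) summable_on ?D"
    by (rule summable_product_nonneg[OF l2_summable[OF \<psi>, folded N_def] hs]) (auto simp: N_def dd0)
  have s1: "B1 summable_on ?D"
    using t1 unfolding B1_def by (simp add: case_prod_beta')
  have s2: "B2 summable_on ?D"
    unfolding B2_def using s1 unfolding B1_def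
    by (subst summable_on_reindex_bij_witness[where j="\<lambda>(m,(m',n)). (m',(m,n))" and i="\<lambda>(m,(m',n)). (m',(m,n))" and T="?D"
          and h="\<lambda>(m,(m',n)). N m * dd (merge V m' n)"]) auto
  have s12: "(\<lambda>x. (B1 x + B2 x) / 2) summable_on ?D"
    using summable_on_cmult_left[OF summable_on_add[OF s1 s2], of "1/2"] by simp
  have bd: "cmod (\<Phi> x) \<le> (B1 x + B2 x) / 2" for x
  proof -
    obtain m m' n where x: "x = (m,(m',n))" by (cases x) auto
    let ?a = "dd (merge V m n)" and ?b = "dd (merge V m' n)"
    have "cmod (\<Phi> x) = cmod (\<psi> m) * cmod (K (merge V m n) (merge V m' n)) * cmod (\<psi> m')"
      unfolding x \<Phi>_def by (simp add: norm_mult)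
    also have "\<dots> \<le> cmod (\<psi> m) * (sqrt ?a * sqrt ?b) * cmod (\<psi> m')"
      by (intro mult_right_mono mult_left_mono) (auto simp: dd_def intro: mixed_off_sqrt[OF K])
    also have "\<dots> = (cmod (\<psi> m) * sqrt ?b) * (cmod (\<psi> m') * sqrt ?a)" by (simp add: algebra_simps)
    also have "\<dots> \<le> ((cmod (\<psi> m) * sqrt ?b)^2 + (cmod (\<psi> m') * sqrt ?a)^2) / 2"
    proof -
      have "0 \<le> (cmod (\<psi> m) * sqrt ?b - cmod (\<psi> m') * sqrt ?a)^2" by simp
      then show ?thesis by (simp add: power2_diff)
    qed
    also have "\<dots> = (B1 x + B2 x) / 2"
      unfolding x B1_def B2_def N_def using dd0 by (simp add: power_mult_distrib)
    finally show ?thesis .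
  qed
  have sPhi: "\<Phi> summable_on ?D" using summable_norm_complex(1)[OF s12 bd] .
  have "l2inner tp V \<psi> (qapply tp V (ptrace tp V G K) \<psi>)
      = infsum (\<lambda>m. infsum (\<lambda>m'. infsum (\<lambda>n. \<Phi> (m,(m',n))) (mems tp G)) (mems tp V)) (mems tp V)"
    unfolding l2inner_def
  proof (rule infsum_cong)
    fix m assume m: "m \<in> mems tp V"
    have "qapply tp V (ptrace tp V G K) \<psi> m = infsum (\<lambda>m'. ptrace tp V G K m m' * \<psi> m') (mems tp V)"
      unfolding qapply_def using m by simp
    also have "\<dots> = infsum (\<lambda>m'. infsum (\<lambda>n. K (merge V m n) (merge V m' n)) (mems tp G) * \<psi> m') (mems tp V)"
      by (rule infsum_cong) (simp add: ptrace_def m)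
    finally have q: "qapply tp V (ptrace tp V G K) \<psi> m = infsum (\<lambda>m'. infsum (\<lambda>n. K (merge V m n) (merge V m' n)) (mems tp G) * \<psi> m') (mems tp V)" .
    show "cnj (\<psi> m) * qapply tp V (ptrace tp V G K) \<psi> m = infsum (\<lambda>m'. infsum (\<lambda>n. \<Phi> (m,(m',n))) (mems tp G)) (mems tp V)"
      unfolding q \<Phi>_def infsum_cmult_right'[symmetric] infsum_cmult_left'[symmetric]
      by (simp add: mult.assoc)
  qed
  also have "\<dots> = infsum (\<lambda>n. infsum (\<lambda>m. infsum (\<lambda>m'. \<Phi> (m,(m',n))) (mems tp V)) (mems tp V)) (mems tp G)"
    by (rule triple_swap[OF sPhi])
  also have "\<dots> = infsum (\<lambda>n. l2inner tp (V \<union> G) (liftvec tp V G n \<psi>) (qapply tp (V \<union> G) K (liftvec tp V G n \<psi>))) (mems tp G)"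
    by (rule infsum_cong) (simp add: inner_lift_K \<Phi>_def)
  finally have eq: "l2inner tp V \<psi> (qapply tp V (ptrace tp V G K) \<psi>) = infsum (\<lambda>n. l2inner tp (V \<union> G) (liftvec tp V G n \<psi>) (qapply tp (V \<union> G) K (liftvec tp V G n \<psi>))) (mems tp G)" .
  let ?P = "\<lambda>n. l2inner tp (V \<union> G) (liftvec tp V G n \<psi>) (qapply tp (V \<union> G) K (liftvec tp V G n \<psi>))"
  have P: "Im (?P n) = 0 \<and> Re (?P n) \<ge> 0" if n: "n \<in> mems tp G" for n
    using mixed_pos[OF K liftvec_l2(1)[OF disj n \<psi>]] by simp
  show ?thesis
  proof (cases "?P summable_on mems tp G")
    case True
    have "Im (infsum ?P (mems tp G)) = infsum (\<lambda>n. Im (?P n)) (mems tp G)" using infsum_Im[OF True] by simp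
    also have "\<dots> = 0" by (rule infsum_0) (use P in simp)
    finally have i: "Im (infsum ?P (mems tp G)) = 0" .
    have "Re (infsum ?P (mems tp G)) = infsum (\<lambda>n. Re (?P n)) (mems tp G)" using infsum_Re[OF True] by simp
    also have "\<dots> \<ge> 0" by (rule infsum_nonneg) (use P in simp)
    finally show ?thesis using i eq by simp
  next
    case False
    then show ?thesis using eq by (simp add: infsum_not_exists)
  qed
qed

lemma mixed_ptrace: "mixed tp V (ptrace tp V G K)"
proof (rule mixedI)
  let ?R = "ptrace tp V G K"
  show "?R m m' = 0" if "m \<notin> mems tp V \<or> m' \<notin> mems tp V" for m m'
    using that unfolding ptrace_def by auto
  have rd: "Re (?R m m) = (if m \<in> mems tp V then DD m else 0)" for m
    using ptrace_diag[of m] ptrace_diag_out[of m m] by auto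
  show "Re (?R m m) \<ge> 0" for m unfolding rd using DD0 by simp
  show "(\<lambda>m. Re (?R m m)) summable_on mems tp V"
    using DD_summable by (rule summable_on_cong[THEN iffD1, rotated]) (simp add: rd)
  show "cmod (?R a b) \<le> sqrt (Re (?R a a)) * sqrt (Re (?R b b))" for a b
  proof (cases "a \<in> mems tp V \<and> b \<in> mems tp V")
    case True then show ?thesis using ptrace_bound[of a b] by (simp add: rd)
  next
    case False then show ?thesis unfolding ptrace_def using DD0 by auto
  qed
  show "Im (l2inner tp V \<psi> (qapply tp V ?R \<psi>)) = 0 \<and> Re (l2inner tp V \<psi> (qapply tp V ?R \<psi>)) \<ge> 0"
    if "\<psi> \<in> l2 tp V" for \<psi> using ptrace_pos[OF that] .
qed

end

lemma has_sum_diff':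
  fixes f g :: "_ \<Rightarrow> 'b::{topological_ab_group_add}"
  assumes "(f has_sum a) A" "(g has_sum b) A"
  shows "((\<lambda>x. f x - g x) has_sum (a - b)) A"
proof -
  have "((\<lambda>x. - g x) has_sum (-b)) A" using has_sum_uminus[where f=g and a="-b" and A=A] assms(2) by simp
  from has_sum_add[OF assms(1) this] show ?thesis by simp
qed

lemma infsum_diff':
  fixes f g :: "_ \<Rightarrow> complex"
  assumes "f summable_on A" "g summable_on A"
  shows "infsum (\<lambda>x. f x - g x) A = infsum f A - infsum g A"
  using has_sum_diff'[OF has_sum_infsum[OF assms(1)] has_sum_infsum[OF assms(2)]] by (rule infsumI)

lemma infsum_split_fin:
  fixes f :: "_ \<Rightarrow> 'b::{topological_ab_group_add,t2_space}"
  assumes "(f has_sum s) A" "finite F" "F \<subseteq> A"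
  shows "(f has_sum (s - sum f F)) (A - F)"
proof -
  have hF: "(f has_sum sum f F) F" using assms(2) by simp
  have "((\<lambda>x. if x \<in> F then f x else 0) has_sum sum f F) A"
    by (rule has_sum_cong_neutral[THEN iffD1, OF _ _ _ hF]) (use assms(3) in auto)
  from has_sum_diff'[OF assms(1) this]
  have "((\<lambda>x. f x - (if x \<in> F then f x else 0)) has_sum (s - sum f F)) A" .
  then show ?thesis
    by (rule has_sum_cong_neutral[THEN iffD1, rotated -1]) auto
qed

lemma small_tail:
  fixes h :: "_ \<Rightarrow> real"
  assumes h: "h summable_on A" and e: "e > 0"
  shows "\<exists>F. finite F \<and> F \<subseteq> A \<and> infsum h (A - F) < e"
proof -
  obtain F where F: "finite F" "F \<subseteq> A" "dist (sum h F) (infsum h A) \<le> e/2"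
    using infsum_finite_approximation[OF h, of "e/2"] e by auto
  have "(h has_sum (infsum h A - sum h F)) (A - F)" by (rule infsum_split_fin[OF has_sum_infsum[OF h] F(1,2)])
  then have "infsum h (A - F) = infsum h A - sum h F" by (rule infsumI)
  also have "\<dots> < e"
  proof -
    have "\<bar>sum h F - infsum h A\<bar> \<le> e/2" using F(3) by (simp add: dist_real_def)
    then show ?thesis using e unfolding abs_le_iff by linarith
  qed
  finally show ?thesis using F by blast
qed

lemma range_in_cclosed:
  assumes A: "cclosed tp V A" and R: "mixed tp V R"
    and cols: "\<And>m'. m' \<in> mems tp V \<Longrightarrow> (\<lambda>m. R m m') \<in> A" and \<phi>: "\<phi> \<in> l2 tp V"
  shows "qapply tp V R \<phi> \<in> A"
proof -
  obtain C where C: "\<forall>\<psi>\<in>l2 tp V. qapply tp V R \<psi> \<in> l2 tp V \<and> l2norm tp V (qapply tp V R \<psi>) \<le> C * l2norm tp V \<psi>"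
    using mixed_bounded[OF R] by blast
  define C' where "C' = \<bar>C\<bar> + 1"
  have C'0: "C' > 0" unfolding C'_def by simp
  have rowsum: "(\<lambda>m'. R m m' * \<psi> m') summable_on mems tp V" if "\<psi> \<in> l2 tp V" for m \<psi>
    by (rule CS_complex(1)[OF l2_summable[OF mixed_row[OF R]] l2_summable[OF that]])
  show ?thesis
  proof (rule cclosedD(4)[OF A])
    show "qapply tp V R \<phi> \<in> l2 tp V" using C \<phi> by blast
    fix e :: real assume e: "e > 0"
    define \<delta> where "\<delta> = e / C'"
    have \<delta>: "\<delta> > 0" unfolding \<delta>_def using e C'0 by simp
    obtain F where F: "finite F" "F \<subseteq> mems tp V" and tl: "infsum (\<lambda>m. (cmod (\<phi> m))^2) (mems tp V - F) < \<delta>^2"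
      using small_tail[OF l2_summable[OF \<phi>], of "\<delta>^2"] \<delta> by auto
    define \<phi>F where "\<phi>F = (\<lambda>m. if m \<in> F then \<phi> m else 0)"
    have zF: "\<And>m. m \<notin> F \<Longrightarrow> \<phi>F m = 0" unfolding \<phi>F_def by simp
    have \<phi>Fl: "\<phi>F \<in> l2 tp V" by (rule l2_fin_supp[OF F zF])
    have d: "(\<lambda>m. \<phi> m - \<phi>F m) \<in> l2 tp V" by (rule l2_diff[OF \<phi> \<phi>Fl])
    have inA: "qapply tp V R \<phi>F \<in> A"
    proof -
      have "qapply tp V R \<phi>F = (\<lambda>m. \<Sum>m'\<in>F. (\<lambda>m. \<phi> m' * R m m') m)"
      proof (rule ext)
        fix m show "qapply tp V R \<phi>F m = (\<Sum>m'\<in>F. \<phi> m' * R m m')"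
        proof (cases "m \<in> mems tp V")
          case True
          have "qapply tp V R \<phi>F m = (\<Sum>m'\<in>F. R m m' * \<phi>F m')" by (rule qapply_fin[OF F zF True])
          also have "\<dots> = (\<Sum>m'\<in>F. \<phi> m' * R m m')" by (rule sum.cong) (auto simp: \<phi>F_def mult.commute)
          finally show ?thesis .
        next
          case False
          then show ?thesis unfolding qapply_def using mixed_zero[OF R] by simp
        qed
      qed
      moreover have "(\<lambda>m. \<Sum>m'\<in>F. (\<lambda>m. \<phi> m' * R m m') m) \<in> A"
        by (rule cclosed_sum[OF A F(1)]) (use cclosedD(3)[OF A] cols F(2) in blast)
      ultimately show ?thesis by simp
    qed
    have lin: "(\<lambda>m. qapply tp V R \<phi> m - qapply tp V R \<phi>F m) = qapply tp V R (\<lambda>m. \<phi> m - \<phi>F m)"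
    proof (rule ext)
      fix m show "qapply tp V R \<phi> m - qapply tp V R \<phi>F m = qapply tp V R (\<lambda>m. \<phi> m - \<phi>F m) m"
        unfolding qapply_def using infsum_diff'[OF rowsum[OF \<phi>] rowsum[OF \<phi>Fl], of m]
        by (simp add: right_diff_distrib)
    qed
    have nd: "l2norm tp V (\<lambda>m. \<phi> m - \<phi>F m) < \<delta>"
    proof (rule l2norm_lt[OF _ \<delta>])
      have "infsum (\<lambda>m. (cmod (\<phi> m - \<phi>F m))^2) (mems tp V) = infsum (\<lambda>m. (cmod (\<phi> m))^2) (mems tp V - F)"
        by (rule infsum_cong_neutral) (auto simp: \<phi>F_def)
      then show "infsum (\<lambda>m. (cmod (\<phi> m - \<phi>F m))^2) (mems tp V) < \<delta>^2" using tl by simp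
    qed
    have "l2norm tp V (qapply tp V R (\<lambda>m. \<phi> m - \<phi>F m)) \<le> C * l2norm tp V (\<lambda>m. \<phi> m - \<phi>F m)"
      using C d by blast
    also have "\<dots> \<le> C' * l2norm tp V (\<lambda>m. \<phi> m - \<phi>F m)"
      by (rule mult_right_mono) (auto simp: C'_def l2norm_nonneg)
    also have "\<dots> < C' * \<delta>" using nd C'0 by simp
    also have "\<dots> = e" unfolding \<delta>_def using C'0 by simp
    finally show "\<exists>\<xi>\<in>A. l2norm tp V (\<lambda>m. qapply tp V R \<phi> m - \<xi> m) < e"
      using inA lin by (intro bexI[of _ "qapply tp V R \<phi>F"]) auto
  qed
qed

context
  fixes tp :: "'v \<Rightarrow> 'val set" and V G W :: "'v set" and K :: "('v,'val) qop" and S :: "('v,'val) qvec set"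
  assumes disj: "V \<inter> G = {}" and K: "mixed tp (V \<union> G) K" and WV: "W \<subseteq> V" and S: "S \<subseteq> l2 tp W"
    and sK: "supp tp (V \<union> G) K \<subseteq> qin tp (V \<union> G) W S"
begin

lemma colK_qin:
  assumes b: "b \<in> mems tp (V \<union> G)"
  shows "(\<lambda>x. K x b) \<in> qin tp (V \<union> G) W S"
proof -
  define e where "e = (\<lambda>x. if x = b then (1::complex) else 0)"
  have F: "finite {b}" "{b} \<subseteq> mems tp (V \<union> G)" using b by auto
  have z: "\<And>x. x \<notin> {b} \<Longrightarrow> e x = 0" unfolding e_def by simp
  have el: "e \<in> l2 tp (V \<union> G)" by (rule l2_fin_supp[OF F z])
  have "qapply tp (V \<union> G) K e = (\<lambda>x. K x b)"
  proof (rule ext)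
    fix x show "qapply tp (V \<union> G) K e x = K x b"
    proof (cases "x \<in> mems tp (V \<union> G)")
      case True
      have "qapply tp (V \<union> G) K e x = (\<Sum>m'\<in>{b}. K x m' * e m')" by (rule qapply_fin[OF F z True])
      then show ?thesis unfolding e_def by simp
    next
      case False
      then show ?thesis unfolding qapply_def using mixed_zero[OF K] by simp
    qed
  qed
  then show ?thesis using range_in_supp[OF K el] sK by auto
qed

lemma colR_l2:
  assumes m': "m' \<in> mems tp V"
  shows "(\<lambda>m. ptrace tp V G K m m') \<in> l2 tp V"
proof (rule l2I)
  show "ptrace tp V G K m m' = 0" if "m \<notin> mems tp V" for m using that unfolding ptrace_def by simp
  have b: "(cmod (ptrace tp V G K m m'))^2 \<le> DD tp V G K m * DD tp V G K m'" for m
  proof -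
    have "(cmod (ptrace tp V G K m m'))^2 \<le> (sqrt (DD tp V G K m) * sqrt (DD tp V G K m'))^2"
      using ptrace_bound[OF disj K, of m m'] by (simp add: power_mono)
    also have "\<dots> = DD tp V G K m * DD tp V G K m'"
      using DD0[OF disj K] by (simp add: power_mult_distrib)
    finally show ?thesis .
  qed
  show "(\<lambda>m. (cmod (ptrace tp V G K m m'))\<^sup>2) summable_on mems tp V"
    by (rule summable_on_comparison_test[OF summable_on_cmult_left[OF DD_summable[OF disj K]]]) (use b in auto)
qed

lemma colR_qin:
  assumes m': "m' \<in> mems tp V"
  shows "(\<lambda>m. ptrace tp V G K m m') \<in> qin tp V W S"
proof (rule cclosedD(4)[OF qin_cclosed colR_l2[OF m']])
  fix e :: real assume e: "e > 0"
  let ?dd = "dd K" and ?DD = "DD tp V G K"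
  define T where "T = infsum ?DD (mems tp V)"
  have T0: "T \<ge> 0" unfolding T_def using DD0[OF disj K] by (simp add: infsum_nonneg)
  let ?h = "\<lambda>n. ?dd (merge V m' n)"
  obtain F where F: "finite F" "F \<subseteq> mems tp G" and tl: "infsum ?h (mems tp G - F) < e^2 / (T + 1)"
    using small_tail[OF dd_slice_summable[OF disj K m'], of "e^2 / (T+1)"] e T0 by auto
  define fF where "fF = (\<lambda>m. \<Sum>n\<in>F. slicev tp V n (\<lambda>x. K x (merge V m' n)) m)"
  have fFq: "fF \<in> qin tp V W S"
    unfolding fF_def
  proof (rule cclosed_sum[OF qin_cclosed F(1)])
    fix n assume n: "n \<in> F"
    then have nG: "n \<in> mems tp G" using F by blast
    have "merge V m' n \<in> mems tp (V \<union> G)" by (rule merge_mems[OF m' nG])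
    then show "slicev tp V n (\<lambda>x. K x (merge V m' n)) \<in> qin tp V W S"
      by (rule slice_qin[OF disj WV S nG colK_qin])
  qed
  have dd0': "\<And>x. ?dd x \<ge> 0" using dd0[OF disj K] .
  have pt: "(cmod (ptrace tp V G K m m' - fF m))^2 \<le> ?DD m * infsum ?h (mems tp G - F)" for m
  proof (cases "m \<in> mems tp V")
    case True
    let ?k = "\<lambda>n. K (merge V m n) (merge V m' n)"
    have ks: "(?k has_sum ptrace tp V G K m m') (mems tp G)"
      unfolding ptrace_def using True m' entry_summable(1)[OF disj K True m'] by simp
    have fFm: "fF m = sum ?k F" unfolding fF_def slicev_def using True by simp
    have tailk: "(?k has_sum (ptrace tp V G K m m' - fF m)) (mems tp G - F)"
      unfolding fFm by (rule infsum_split_fin[OF ks F])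
    let ?A = "mems tp G - F"
    have sub: "?A \<subseteq> mems tp G" by blast
    let ?f = "\<lambda>n. sqrt (?dd (merge V m n))" and ?g = "\<lambda>n. sqrt (?dd (merge V m' n))"
    have f2: "(\<lambda>n. (?f n)^2) summable_on ?A"
      using summable_on_subset[OF dd_slice_summable[OF disj K True] sub] dd0' by simp
    have g2: "(\<lambda>n. (?g n)^2) summable_on ?A"
      using summable_on_subset[OF dd_slice_summable[OF disj K m'] sub] dd0' by simp
    have ksA: "(\<lambda>n. cmod (?k n)) summable_on ?A"
      by (rule summable_on_subset[OF entry_summable(2)[OF disj K True m'] sub])
    have "cmod (ptrace tp V G K m m' - fF m) = cmod (infsum ?k ?A)" using tailk by (simp add: infsumI)
    also have "\<dots> \<le> infsum (\<lambda>n. cmod (?k n)) ?A" by (rule norm_infsum_bound) (use ksA in simp)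
    also have "\<dots> \<le> infsum (\<lambda>n. ?f n * ?g n) ?A"
      by (rule infsum_mono[OF ksA CS_real(1)[OF f2 g2]])
         (auto simp: dd_def[OF disj K] mixed_diag(2)[OF K] intro: mixed_off_sqrt[OF K])
    also have "\<dots> \<le> sqrt (infsum (\<lambda>n. (?f n)^2) ?A) * sqrt (infsum (\<lambda>n. (?g n)^2) ?A)"
      by (rule CS_real(2)[OF f2 g2]) (auto simp: dd0')
    also have "\<dots> = sqrt (infsum (\<lambda>n. ?dd (merge V m n)) ?A) * sqrt (infsum ?h ?A)" using dd0' by simp
    finally have c: "cmod (ptrace tp V G K m m' - fF m) \<le> sqrt (infsum (\<lambda>n. ?dd (merge V m n)) ?A) * sqrt (infsum ?h ?A)" .
    have i1: "infsum (\<lambda>n. ?dd (merge V m n)) ?A \<le> ?DD m"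
      unfolding DD_def[OF disj K]
      by (rule infsum_mono_neutral[OF summable_on_subset[OF dd_slice_summable[OF disj K True] sub] dd_slice_summable[OF disj K True]])
         (use dd0' in auto)
    have i0: "infsum (\<lambda>n. ?dd (merge V m n)) ?A \<ge> 0" "infsum ?h ?A \<ge> 0" using dd0' by (simp_all add: infsum_nonneg)
    have "(cmod (ptrace tp V G K m m' - fF m))^2 \<le> (sqrt (infsum (\<lambda>n. ?dd (merge V m n)) ?A) * sqrt (infsum ?h ?A))^2"
      using c by (simp add: power_mono)
    also have "\<dots> = infsum (\<lambda>n. ?dd (merge V m n)) ?A * infsum ?h ?A" using i0 by (simp add: power_mult_distrib)
    also have "\<dots> \<le> ?DD m * infsum ?h ?A" by (rule mult_right_mono[OF i1 i0(2)])
    finally show ?thesis .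
  next
    case False
    then show ?thesis unfolding ptrace_def fF_def slicev_def
      using DD0[OF disj K, of m] dd0' by (simp add: infsum_nonneg)
  qed
  let ?tl = "infsum ?h (mems tp G - F)"
  have tl0: "?tl \<ge> 0" using dd0' by (simp add: infsum_nonneg)
  have s: "(\<lambda>m. (cmod (ptrace tp V G K m m' - fF m))^2) summable_on mems tp V"
    by (rule summable_on_comparison_test[OF summable_on_cmult_left[OF DD_summable[OF disj K], of ?tl]]) (use pt in auto)
  have "infsum (\<lambda>m. (cmod (ptrace tp V G K m m' - fF m))^2) (mems tp V) \<le> infsum (\<lambda>m. ?DD m * ?tl) (mems tp V)"
    by (rule infsum_mono[OF s summable_on_cmult_left[OF DD_summable[OF disj K]]]) (use pt in auto)
  also have "\<dots> = T * ?tl" unfolding T_def by (simp add: infsum_cmult_left')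
  also have "\<dots> < e^2"
  proof -
    have "T * ?tl \<le> T * (e^2 / (T+1))" by (rule mult_left_mono) (use tl T0 in auto)
    also have "\<dots> < e^2"
    proof -
      have "T * (e^2 / (T+1)) = e^2 * (T / (T+1))" by simp
      also have "\<dots> < e^2 * 1" using e T0 by (intro mult_strict_left_mono) auto
      finally show ?thesis by simp
    qed
    finally show ?thesis .
  qed
  finally have "l2norm tp V (\<lambda>m. ptrace tp V G K m m' - fF m) < e" by (rule l2norm_lt[OF _ e])
  then show "\<exists>\<phi>\<in>qin tp V W S. l2norm tp V (\<lambda>m. ptrace tp V G K m m' - \<phi> m) < e"
    using fFq by blast
qed

lemma supp_ptrace: "supp tp V (ptrace tp V G K) \<subseteq> qin tp V W S"
  by (rule supp_sub[OF qin_cclosed range_in_cclosed[OF qin_cclosed mixed_ptrace[OF disj K] colR_qin]])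

end

lemma ptrace_ptrace:
  assumes XR: "X \<inter> R = {}" and G: "(X \<union> R) \<inter> G = {}" and K: "mixed tp (X \<union> R \<union> G) K"
  shows "ptrace tp X R (ptrace tp (X \<union> R) G K) = ptrace tp X (R \<union> G) K"
proof (intro ext)
  fix m m'
  show "ptrace tp X R (ptrace tp (X \<union> R) G K) m m' = ptrace tp X (R \<union> G) K m m'"
  proof (cases "m \<in> mems tp X \<and> m' \<in> mems tp X")
    case True
    have RG: "R \<inter> G = {}" using G by blast
    have X2: "X \<inter> (R \<union> G) = {}" using XR G by blast
    have K2: "mixed tp (X \<union> (R \<union> G)) K" using K by (simp add: Un_assoc)
    let ?f = "\<lambda>n. K (merge X m n) (merge X m' n)"
    have fs: "?f summable_on mems tp (R \<union> G)" using entry_summable(1)[OF X2 K2] True by blast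
    have "ptrace tp X R (ptrace tp (X \<union> R) G K) m m'
        = infsum (\<lambda>r. ptrace tp (X \<union> R) G K (merge X m r) (merge X m' r)) (mems tp R)"
      unfolding ptrace_def using True by simp
    also have "\<dots> = infsum (\<lambda>r. infsum (\<lambda>g. ?f (merge R r g)) (mems tp G)) (mems tp R)"
    proof (rule infsum_cong)
      fix r assume r: "r \<in> mems tp R"
      have a: "merge X m r \<in> mems tp (X \<union> R)" "merge X m' r \<in> mems tp (X \<union> R)"
        using merge_mems[OF _ r] True by auto
      show "ptrace tp (X \<union> R) G K (merge X m r) (merge X m' r) = infsum (\<lambda>g. ?f (merge R r g)) (mems tp G)"
        unfolding ptrace_def using a by (simp add: merge_assoc)
    qed
    also have "\<dots> = infsum ?f (mems tp (R \<union> G))" by (rule infsum_mems_Un_iter[OF RG fs])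
    also have "\<dots> = ptrace tp X (R \<union> G) K m m'" unfolding ptrace_def using True by simp
    finally show ?thesis .
  next
    case False
    then show ?thesis unfolding ptrace_def by auto
  qed
qed

lemma sums_interchange:
  fixes T :: "nat \<Rightarrow> 'a \<Rightarrow> complex"
  assumes sT: "\<And>g. g \<in> A \<Longrightarrow> (\<lambda>i. T i g) sums k g"
    and B: "(\<lambda>(g,i). B g i) summable_on A \<times> UNIV" and bd: "\<And>g i. g \<in> A \<Longrightarrow> cmod (T i g) \<le> B g i"
  shows "(\<lambda>i. infsum (T i) A) sums infsum k A"
proof -
  have s: "(\<lambda>(g,i). T i g) summable_on A \<times> UNIV"
    by (rule summable_norm_complex(1)[OF B]) (use bd in auto)
  have s': "(\<lambda>(i,g). T i g) summable_on UNIV \<times> A"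
    using s summable_on_swap[of "\<lambda>(g,i). T i g" A UNIV] by (simp add: case_prod_beta')
  have kg: "infsum (\<lambda>i. T i g) UNIV = k g" if g: "g \<in> A" for g
  proof -
    have sec: "(\<lambda>i. T i g) summable_on UNIV"
      using summable_on_SigmaD1[of "\<lambda>g i. T i g" A "\<lambda>_. UNIV", OF _ g] s by simp
    have "(\<lambda>i. T i g) sums infsum (\<lambda>i. T i g) UNIV" by (rule has_sum_imp_sums[OF has_sum_infsum[OF sec]])
    then show ?thesis using sT[OF g] sums_unique2 by blast
  qed
  have sw: "infsum (\<lambda>g. infsum (\<lambda>i. T i g) UNIV) A = infsum (\<lambda>i. infsum (\<lambda>g. T i g) A) UNIV"
    using infsum_swap_banach[of "\<lambda>g i. T i g" A UNIV] s by simp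
  have summ: "(\<lambda>i. infsum (\<lambda>g. T i g) A) summable_on UNIV"
    using summable_on_Sigma_banach[of "\<lambda>i g. T i g" UNIV "\<lambda>_. A"] s' by simp
  have "(\<lambda>i. infsum (T i) A) sums infsum (\<lambda>i. infsum (\<lambda>g. T i g) A) UNIV"
    using has_sum_imp_sums[OF has_sum_infsum[OF summ]] by simp
  also have "infsum (\<lambda>i. infsum (\<lambda>g. T i g) A) UNIV = infsum k A"
    using sw kg by (metis (no_types, lifting) infsum_cong)
  finally show ?thesis .
qed

lemma qtensor_diag:
  assumes "mixed tp V \<rho>" "mixed tp W \<rho>'"
  shows "Re (qtensor tp V W \<rho> \<rho>' a a) = (if a \<in> mems tp (V \<union> W) then Re (\<rho> (restrict a V) (restrict a V)) * Re (\<rho>' (restrict a W) (restrict a W)) else 0)"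
    "Re (qtensor tp V W \<rho> \<rho>' a a) \<ge> 0"
proof -
  show e: "Re (qtensor tp V W \<rho> \<rho>' a a) = (if a \<in> mems tp (V \<union> W) then Re (\<rho> (restrict a V) (restrict a V)) * Re (\<rho>' (restrict a W) (restrict a W)) else 0)"
    unfolding qtensor_def using mixed_diag(1)[OF assms(1)] mixed_diag(1)[OF assms(2)] by simp
  show "Re (qtensor tp V W \<rho> \<rho>' a a) \<ge> 0"
    unfolding e using mixed_diag(2)[OF assms(1)] mixed_diag(2)[OF assms(2)] by simp
qed

lemma qtensor_bound:
  assumes r: "mixed tp V \<rho>" and r': "mixed tp W \<rho>'"
  shows "cmod (qtensor tp V W \<rho> \<rho>' a b) \<le> (Re (qtensor tp V W \<rho> \<rho>' a a) + Re (qtensor tp V W \<rho> \<rho>' b b)) / 2"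
proof (cases "a \<in> mems tp (V \<union> W) \<and> b \<in> mems tp (V \<union> W)")
  case True
  let ?p = "Re (\<rho> (restrict a V) (restrict a V))" and ?q = "Re (\<rho> (restrict b V) (restrict b V))"
  let ?p' = "Re (\<rho>' (restrict a W) (restrict a W))" and ?q' = "Re (\<rho>' (restrict b W) (restrict b W))"
  have nn: "?p \<ge> 0" "?q \<ge> 0" "?p' \<ge> 0" "?q' \<ge> 0" using mixed_diag(2)[OF r] mixed_diag(2)[OF r'] by auto
  have "cmod (qtensor tp V W \<rho> \<rho>' a b) = cmod (\<rho> (restrict a V) (restrict b V)) * cmod (\<rho>' (restrict a W) (restrict b W))"
    unfolding qtensor_def using True by (simp add: norm_mult)
  also have "\<dots> \<le> (sqrt ?p * sqrt ?q) * (sqrt ?p' * sqrt ?q')"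
    by (intro mult_mono mixed_off_sqrt[OF r] mixed_off_sqrt[OF r']) (use nn in auto)
  also have "\<dots> = sqrt (?p * ?p') * sqrt (?q * ?q')" by (simp add: real_sqrt_mult)
  also have "\<dots> \<le> (?p * ?p' + ?q * ?q') / 2" by (rule sqrt_mult_le_avg) (use nn in auto)
  also have "\<dots> = (Re (qtensor tp V W \<rho> \<rho>' a a) + Re (qtensor tp V W \<rho> \<rho>' b b)) / 2"
    unfolding qtensor_diag(1)[OF r r'] using True by simp
  finally show ?thesis .
next
  case False
  then show ?thesis unfolding qtensor_def using qtensor_diag(2)[OF r r', of a] qtensor_diag(2)[OF r r', of b]
    unfolding qtensor_def by auto
qed

lemma separable_ptrace:
  assumes sep: "separable tp (A \<union> G) B K" and AB: "A \<inter> B = {}" and AG: "A \<inter> G = {}" and BG: "B \<inter> G = {}"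
    and K: "mixed tp (A \<union> B \<union> G) K"
  shows "separable tp A B (ptrace tp (A \<union> B) G K)"
proof -
  obtain \<rho>s \<rho>s' where m: "\<forall>i. mixed tp (A \<union> G) (\<rho>s i) \<and> mixed tp B (\<rho>s' i)"
    and s: "\<forall>m m'. (\<lambda>i. qtensor tp (A \<union> G) B (\<rho>s i) (\<rho>s' i) m m') sums K m m'"
    using sep unfolding separable_def by blast
  have ABG: "(A \<union> B) \<inter> G = {}" using AG BG by blast
  define \<sigma>s where "\<sigma>s = (\<lambda>i. ptrace tp A G (\<rho>s i))"
  define Tt where "Tt = (\<lambda>i. qtensor tp (A \<union> G) B (\<rho>s i) (\<rho>s' i))"
  have m': "mixed tp A (\<sigma>s i)" for i unfolding \<sigma>s_def using mixed_ptrace[OF AG] m by blast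
  have se: "A \<union> G \<union> B = A \<union> B \<union> G" by blast
  have eq: "qtensor tp A B (\<sigma>s i) (\<rho>s' i) x y = ptrace tp (A \<union> B) G (Tt i) x y" for i x y
  proof (cases "x \<in> mems tp (A \<union> B) \<and> y \<in> mems tp (A \<union> B)")
    case True
    have xA: "restrict x A \<in> mems tp A" "restrict y A \<in> mems tp A" using True restrict_mems by blast+
    have "qtensor tp A B (\<sigma>s i) (\<rho>s' i) x y
        = infsum (\<lambda>g. \<rho>s i (merge A (restrict x A) g) (merge A (restrict y A) g)) (mems tp G) * \<rho>s' i (restrict x B) (restrict y B)"
      unfolding qtensor_def \<sigma>s_def ptrace_def using True xA by simp
    also have "\<dots> = infsum (\<lambda>g. \<rho>s i (merge A (restrict x A) g) (merge A (restrict y A) g) * \<rho>s' i (restrict x B) (restrict y B)) (mems tp G)"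
      by (rule infsum_cmult_left'[symmetric])
    also have "\<dots> = infsum (\<lambda>g. Tt i (merge (A \<union> B) x g) (merge (A \<union> B) y g)) (mems tp G)"
    proof (rule infsum_cong)
      fix g assume g: "g \<in> mems tp G"
      have mm: "merge (A \<union> B) x g \<in> mems tp (A \<union> G \<union> B)" "merge (A \<union> B) y g \<in> mems tp (A \<union> G \<union> B)"
        using merge_mems[OF _ g] True se by auto
      have r1: "restrict (merge (A \<union> B) z g) (A \<union> G) = merge A (restrict z A) g" if "z \<in> mems tp (A \<union> B)" for z
      proof (rule ext)
        fix v show "restrict (merge (A \<union> B) z g) (A \<union> G) v = merge A (restrict z A) g v"
          using g that AG BG unfolding restrict_def merge_def mems_iff by auto
      qed
      have r2: "restrict (merge (A \<union> B) z g) B = restrict z B" for z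
        unfolding restrict_def merge_def by (rule ext) auto
      show "\<rho>s i (merge A (restrict x A) g) (merge A (restrict y A) g) * \<rho>s' i (restrict x B) (restrict y B)
          = Tt i (merge (A \<union> B) x g) (merge (A \<union> B) y g)"
        unfolding Tt_def qtensor_def using mm r1[of x] r1[of y] r2[of x] r2[of y] True by simp
    qed
    also have "\<dots> = ptrace tp (A \<union> B) G (Tt i) x y" unfolding ptrace_def using True by simp
    finally show ?thesis .
  next
    case False
    then show ?thesis unfolding qtensor_def ptrace_def by auto
  qed
  have sums: "(\<lambda>i. ptrace tp (A \<union> B) G (Tt i) x y) sums ptrace tp (A \<union> B) G K x y" for x y
  proof (cases "x \<in> mems tp (A \<union> B) \<and> y \<in> mems tp (A \<union> B)")
    case True
    let ?T = "\<lambda>i g. Tt i (merge (A \<union> B) x g) (merge (A \<union> B) y g)"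
    let ?k = "\<lambda>g. K (merge (A \<union> B) x g) (merge (A \<union> B) y g)"
    let ?B = "\<lambda>g i. (Re (Tt i (merge (A \<union> B) x g) (merge (A \<union> B) x g)) + Re (Tt i (merge (A \<union> B) y g) (merge (A \<union> B) y g))) / 2"
    have sT: "(\<lambda>i. ?T i g) sums ?k g" for g using s unfolding Tt_def by blast
    have bd: "cmod (?T i g) \<le> ?B g i" for g i
      unfolding Tt_def using qtensor_bound m by blast
    have Bnn: "?B g i \<ge> 0" for g i
    proof -
      have "mixed tp (A \<union> G) (\<rho>s i)" "mixed tp B (\<rho>s' i)" using m by auto
      note q = qtensor_diag(2)[OF this]
      show ?thesis unfolding Tt_def using q[of "merge (A \<union> B) x g"] q[of "merge (A \<union> B) y g"] by simp
    qed
    have Bhas: "((\<lambda>i. ?B g i) has_sum (dd K (merge (A \<union> B) x g) + dd K (merge (A \<union> B) y g)) / 2) UNIV" for g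
    proof (rule sums_nonneg_imp_has_sum)
      have "(\<lambda>i. Re (Tt i (merge (A \<union> B) x g) (merge (A \<union> B) x g))) sums Re (K (merge (A \<union> B) x g) (merge (A \<union> B) x g))"
        using sums_Re s unfolding Tt_def by blast
      moreover have "(\<lambda>i. Re (Tt i (merge (A \<union> B) y g) (merge (A \<union> B) y g))) sums Re (K (merge (A \<union> B) y g) (merge (A \<union> B) y g))"
        using sums_Re s unfolding Tt_def by blast
      ultimately show "(\<lambda>i. ?B g i) sums ((dd K (merge (A \<union> B) x g) + dd K (merge (A \<union> B) y g)) / 2)"
        unfolding dd_def[OF ABG K] by (intro sums_divide sums_add)
      show "?B g i \<ge> 0" for i by (rule Bnn)
    qed
    have Bsum: "(\<lambda>(g,i). ?B g i) summable_on mems tp G \<times> UNIV"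
    proof -
      have "(\<lambda>p. ?B (fst p) (snd p)) summable_on Sigma (mems tp G) (\<lambda>_. UNIV)"
      proof (rule summable_on_SigmaI[where g="\<lambda>g. (dd K (merge (A \<union> B) x g) + dd K (merge (A \<union> B) y g)) / 2"])
        show "((\<lambda>i. ?B (fst (g, i)) (snd (g, i))) has_sum (dd K (merge (A \<union> B) x g) + dd K (merge (A \<union> B) y g)) / 2) UNIV" if "g \<in> mems tp G" for g
          using Bhas by simp
        have "(\<lambda>g. dd K (merge (A \<union> B) x g) + dd K (merge (A \<union> B) y g)) summable_on mems tp G"
          using True by (intro summable_on_add dd_slice_summable[OF ABG K]) auto
        from summable_on_cmult_left[OF this, of "1/2"]
        show "(\<lambda>g. (dd K (merge (A \<union> B) x g) + dd K (merge (A \<union> B) y g)) / 2) summable_on mems tp G"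
          by simp
        show "?B (fst (g,i)) (snd (g,i)) \<ge> 0" for g i using Bnn by simp
      qed
      then show ?thesis by (simp add: case_prod_beta')
    qed
    have "(\<lambda>i. infsum (?T i) (mems tp G)) sums infsum ?k (mems tp G)"
      by (rule sums_interchange[OF sT Bsum bd])
    then show ?thesis unfolding ptrace_def using True by simp
  next
    case False
    then have "ptrace tp (A \<union> B) G (Tt i) x y = 0" "ptrace tp (A \<union> B) G K x y = 0" for i
      unfolding ptrace_def by auto
    then show ?thesis by simp
  qed
  show ?thesis unfolding separable_def
    using m' m sums eq unfolding Tt_def by (intro exI[of _ \<sigma>s] exI[of _ \<rho>s']) auto
qed

lemma sat_remE:
  assumes d1: "X \<inter> E = {}" "X \<inter> U = {}" "E \<inter> U = {}" and dG: "(X \<union> E \<union> U) \<inter> G = {}"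
    and WV: "W \<subseteq> X \<union> E \<union> U" and S: "S \<subseteq> l2 tp W"
    and sat: "satisfies tp X (E \<union> G) U (qin tp (X \<union> (E \<union> G) \<union> U) W S) \<rho>"
  shows "satisfies tp X E U (qin tp (X \<union> E \<union> U) W S) \<rho>"
proof -
  have e1: "X \<union> (E \<union> G) \<union> U = (X \<union> E \<union> U) \<union> G" by blast
  have e2: "X \<union> (E \<union> G) = (X \<union> E) \<union> G" by blast
  obtain \<rho>o where K0: "mixed tp (X \<union> (E \<union> G) \<union> U) \<rho>o" and sep0: "separable tp (X \<union> (E \<union> G)) U \<rho>o"
    and sK0: "supp tp (X \<union> (E \<union> G) \<union> U) \<rho>o \<subseteq> qin tp (X \<union> (E \<union> G) \<union> U) W S" and pt: "ptrace tp X (E \<union> G \<union> U) \<rho>o = \<rho>"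
    using sat unfolding satisfies_def by blast
  have K: "mixed tp ((X \<union> E \<union> U) \<union> G) \<rho>o" using K0 unfolding e1 .
  have sep: "separable tp ((X \<union> E) \<union> G) U \<rho>o" using sep0 unfolding e2 .
  have sK: "supp tp ((X \<union> E \<union> U) \<union> G) \<rho>o \<subseteq> qin tp ((X \<union> E \<union> U) \<union> G) W S" using sK0 unfolding e1 .
  define \<rho>2 where "\<rho>2 = ptrace tp (X \<union> E \<union> U) G \<rho>o"
  have "mixed tp (X \<union> E \<union> U) \<rho>2" unfolding \<rho>2_def by (rule mixed_ptrace[OF dG K])
  moreover have "separable tp (X \<union> E) U \<rho>2"
    unfolding \<rho>2_def by (rule separable_ptrace[OF sep _ _ _ K]) (use d1 dG in blast)+
  moreover have "supp tp (X \<union> E \<union> U) \<rho>2 \<subseteq> qin tp (X \<union> E \<union> U) W S"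
    unfolding \<rho>2_def by (rule supp_ptrace[OF dG K WV S sK])
  moreover have "ptrace tp X (E \<union> U) \<rho>2 = \<rho>"
  proof -
    have e4: "X \<union> E \<union> U = X \<union> (E \<union> U)" by blast
    have K': "mixed tp (X \<union> (E \<union> U) \<union> G) \<rho>o" using K unfolding e4 .
    have "ptrace tp X (E \<union> U) (ptrace tp (X \<union> (E \<union> U)) G \<rho>o) = ptrace tp X ((E \<union> U) \<union> G) \<rho>o"
      by (rule ptrace_ptrace[OF _ _ K']) (use d1 dG in blast)+
    moreover have "(E \<union> U) \<union> G = E \<union> G \<union> U" by blast
    ultimately show ?thesis unfolding \<rho>2_def e4 using pt by simp
  qed
  ultimately show ?thesis unfolding satisfies_def by blast
qed

lemma sat_remU:
  assumes d1: "X \<inter> E = {}" "X \<inter> U = {}" "E \<inter> U = {}" and dG: "(X \<union> E \<union> U) \<inter> G = {}"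
    and WV: "W \<subseteq> X \<union> E \<union> U" and S: "S \<subseteq> l2 tp W"
    and sat: "satisfies tp X E (U \<union> G) (qin tp (X \<union> E \<union> (U \<union> G)) W S) \<rho>"
  shows "satisfies tp X E U (qin tp (X \<union> E \<union> U) W S) \<rho>"
proof -
  have e1: "X \<union> E \<union> (U \<union> G) = (X \<union> E \<union> U) \<union> G" by blast
  obtain \<rho>o where K0: "mixed tp (X \<union> E \<union> (U \<union> G)) \<rho>o" and sep: "separable tp (X \<union> E) (U \<union> G) \<rho>o"
    and sK0: "supp tp (X \<union> E \<union> (U \<union> G)) \<rho>o \<subseteq> qin tp (X \<union> E \<union> (U \<union> G)) W S" and pt: "ptrace tp X (E \<union> (U \<union> G)) \<rho>o = \<rho>"
    using sat unfolding satisfies_def by blast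
  have K: "mixed tp ((X \<union> E \<union> U) \<union> G) \<rho>o" using K0 unfolding e1 .
  have sK: "supp tp ((X \<union> E \<union> U) \<union> G) \<rho>o \<subseteq> qin tp ((X \<union> E \<union> U) \<union> G) W S" using sK0 unfolding e1 .
  define \<rho>2 where "\<rho>2 = ptrace tp (X \<union> E \<union> U) G \<rho>o"
  have "mixed tp (X \<union> E \<union> U) \<rho>2" unfolding \<rho>2_def by (rule mixed_ptrace[OF dG K])
  moreover have "separable tp (X \<union> E) U \<rho>2"
  proof -
    have e5: "U \<union> (X \<union> E) \<union> G = X \<union> E \<union> U \<union> G" "U \<union> (X \<union> E) = X \<union> E \<union> U" by blast+
    have K2: "mixed tp (U \<union> (X \<union> E) \<union> G) \<rho>o" using K unfolding e5 .
    have "separable tp U (X \<union> E) (ptrace tp (U \<union> (X \<union> E)) G \<rho>o)"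
      by (rule separable_ptrace[OF separable_swap[OF sep] _ _ _ K2]) (use d1 dG in blast)+
    then show ?thesis unfolding \<rho>2_def e5 by (rule separable_swap)
  qed
  moreover have "supp tp (X \<union> E \<union> U) \<rho>2 \<subseteq> qin tp (X \<union> E \<union> U) W S"
    unfolding \<rho>2_def by (rule supp_ptrace[OF dG K WV S sK])
  moreover have "ptrace tp X (E \<union> U) \<rho>2 = \<rho>"
  proof -
    have e4: "X \<union> E \<union> U = X \<union> (E \<union> U)" by blast
    have K': "mixed tp (X \<union> (E \<union> U) \<union> G) \<rho>o" using K unfolding e4 .
    have "ptrace tp X (E \<union> U) (ptrace tp (X \<union> (E \<union> U)) G \<rho>o) = ptrace tp X ((E \<union> U) \<union> G) \<rho>o"
      by (rule ptrace_ptrace[OF _ _ K']) (use d1 dG in blast)+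
    moreover have "(E \<union> U) \<union> G = E \<union> (U \<union> G)" by blast
    ultimately show ?thesis unfolding \<rho>2_def e4 using pt by simp
  qed
  ultimately show ?thesis unfolding satisfies_def by blast
qed

lemma sat_reduce:
  assumes ne: "\<forall>v. tp v \<noteq> {}"
    and d1: "X \<inter> E = {}" "X \<inter> U = {}" "E \<inter> U = {}"
    and WXEU: "W - X \<subseteq> E \<union> U" and S: "S \<subseteq> l2 tp W"
  shows "satisfies tp X E U (qin tp (X \<union> E \<union> U) W S) \<rho>
     \<longleftrightarrow> satisfies tp X (E \<inter> W) (U \<inter> W) (qin tp (X \<union> (E \<inter> W) \<union> (U \<inter> W)) W S) \<rho>"
proof -
  define E0 where "E0 = E \<inter> W"
  define U0 where "U0 = U \<inter> W"
  define GE where "GE = E - W"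
  define GU where "GU = U - W"
  have eE: "E0 \<union> GE = E" unfolding E0_def GE_def by blast
  have eU: "U0 \<union> GU = U" unfolding U0_def GU_def by blast
  have a1: "X \<inter> E0 = {}" "X \<inter> U0 = {}" "E0 \<inter> U0 = {}" using d1 unfolding E0_def U0_def by blast+
  have a2: "(X \<union> E0 \<union> U0) \<inter> GE = {}" using d1 unfolding E0_def U0_def GE_def by blast
  have a3: "W \<subseteq> X \<union> E0 \<union> U0" using WXEU unfolding E0_def U0_def by blast
  have b1: "X \<inter> (E0 \<union> GE) = {}" "X \<inter> U0 = {}" "(E0 \<union> GE) \<inter> U0 = {}" using d1 unfolding E0_def U0_def GE_def by blast+
  have b2: "(X \<union> (E0 \<union> GE) \<union> U0) \<inter> GU = {}" using d1 unfolding E0_def U0_def GE_def GU_def by blast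
  have b3: "W \<subseteq> X \<union> (E0 \<union> GE) \<union> U0" using WXEU unfolding E0_def U0_def by blast
  have "satisfies tp X (E0 \<union> GE) (U0 \<union> GU) (qin tp (X \<union> (E0 \<union> GE) \<union> (U0 \<union> GU)) W S) \<rho>
     \<longleftrightarrow> satisfies tp X E0 U0 (qin tp (X \<union> E0 \<union> U0) W S) \<rho>"
  proof
    assume h: "satisfies tp X (E0 \<union> GE) (U0 \<union> GU) (qin tp (X \<union> (E0 \<union> GE) \<union> (U0 \<union> GU)) W S) \<rho>"
    have "satisfies tp X (E0 \<union> GE) U0 (qin tp (X \<union> (E0 \<union> GE) \<union> U0) W S) \<rho>"
      by (rule sat_remU[OF b1 b2 b3 S h])
    then show "satisfies tp X E0 U0 (qin tp (X \<union> E0 \<union> U0) W S) \<rho>"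
      by (rule sat_remE[OF a1 a2 a3 S])
  next
    assume h: "satisfies tp X E0 U0 (qin tp (X \<union> E0 \<union> U0) W S) \<rho>"
    have "satisfies tp X (E0 \<union> GE) U0 (qin tp (X \<union> (E0 \<union> GE) \<union> U0) W S) \<rho>"
      by (rule sat_addE[OF ne a1 a2 a3 S h])
    then show "satisfies tp X (E0 \<union> GE) (U0 \<union> GU) (qin tp (X \<union> (E0 \<union> GE) \<union> (U0 \<union> GU)) W S) \<rho>"
      by (rule sat_addU[OF ne b1 b2 b3 S])
  qed
  then show ?thesis unfolding eE eU unfolding E0_def U0_def .
qed

theorem lemma3:
  fixes tp :: "'v \<Rightarrow> 'val set" and kind :: "'v \<Rightarrow> vkind"
    and X E1 U1 E2 U2 W :: "'v set"
    and S :: "('v,'val) qvec set" and \<rho> :: "('v,'val) qop"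
  assumes types_nonempty: "\<forall>v. tp v \<noteq> {}"
    and X_prog: "\<forall>x\<in>X. kind x = Program"
    and E1_ent: "\<forall>x\<in>E1. kind x = Entangled" and E2_ent: "\<forall>x\<in>E2. kind x = Entangled"
    and U1_unent: "\<forall>x\<in>U1. kind x = Unentangled" and U2_unent: "\<forall>x\<in>U2. kind x = Unentangled"
    and \<rho>_mixed: "mixed tp X \<rho>"
    and S_pred: "csubspace tp W S"
    and W1: "W - X \<subseteq> E1 \<union> U1"
    and W2: "W - X \<subseteq> E2 \<union> U2"
  shows "satisfies tp X E1 U1 (qin tp (X \<union> E1 \<union> U1) W S) \<rho>
     \<longleftrightarrow> satisfies tp X E2 U2 (qin tp (X \<union> E2 \<union> U2) W S) \<rho>"
proof -
  have S: "S \<subseteq> l2 tp W" using S_pred unfolding csubspace_def by blast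
  have d1: "X \<inter> E1 = {}" "X \<inter> U1 = {}" "E1 \<inter> U1 = {}"
    using X_prog E1_ent U1_unent by fastforce+
  have d2: "X \<inter> E2 = {}" "X \<inter> U2 = {}" "E2 \<inter> U2 = {}"
    using X_prog E2_ent U2_unent by fastforce+
  have eE: "E1 \<inter> W = E2 \<inter> W"
  proof
    show "E1 \<inter> W \<subseteq> E2 \<inter> W"
    proof
      fix x assume x: "x \<in> E1 \<inter> W"
      then have k: "kind x = Entangled" using E1_ent by blast
      then have "x \<notin> X" "x \<notin> U2" using X_prog U2_unent by auto
      then show "x \<in> E2 \<inter> W" using x W2 by blast
    qed
    show "E2 \<inter> W \<subseteq> E1 \<inter> W"
    proof
      fix x assume x: "x \<in> E2 \<inter> W"
      then have k: "kind x = Entangled" using E2_ent by blast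
      then have "x \<notin> X" "x \<notin> U1" using X_prog U1_unent by auto
      then show "x \<in> E1 \<inter> W" using x W1 by blast
    qed
  qed
  have eU: "U1 \<inter> W = U2 \<inter> W"
  proof
    show "U1 \<inter> W \<subseteq> U2 \<inter> W"
    proof
      fix x assume x: "x \<in> U1 \<inter> W"
      then have k: "kind x = Unentangled" using U1_unent by blast
      then have "x \<notin> X" "x \<notin> E2" using X_prog E2_ent by auto
      then show "x \<in> U2 \<inter> W" using x W2 by blast
    qed
    show "U2 \<inter> W \<subseteq> U1 \<inter> W"
    proof
      fix x assume x: "x \<in> U2 \<inter> W"
      then have k: "kind x = Unentangled" using U2_unent by blast
      then have "x \<notin> X" "x \<notin> E1" using X_prog E1_ent by auto
      then show "x \<in> U1 \<inter> W" using x W1 by blast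
    qed
  qed
  show ?thesis
    unfolding sat_reduce[OF types_nonempty d1 W1 S] sat_reduce[OF types_nonempty d2 W2 S] eE eU ..
qed

end
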